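(* Let $\Gamma$ be a compact subset of $\mathbb C\setminus\mathbf a(\mathbb S^1)$. Uniformly over $z,z'\in\Gamma$, as $n\to\infty$, $$\theta_n(z,z')\to\theta(z,z'),\quad\mathcal A_n(z,z')\to\mathcal A(z,z'),\quad\mathcal B_n(z,z')\to\mathcal B(z,z').$$ If $U_n=F_n$ for all $n$ and $\varepsilon=1$, or if $U_n$ is a real orthogonal matrix for all $n$ and $\varepsilon=-1$, then uniformly over $z,z'\in\Gamma$, $$\theta'_n(z,z')\to\theta_\varepsilon(z,z'),\quad\mathcal A'_n(z,z')\to\mathcal A_\varepsilon(z,z'),\quad\mathcal B'_n(z,z')\to\mathcal B_\varepsilon(z,z').$$
   Context: Fix integers $r\ge0,s\ge1$, complex $a_{-r},\dots,a_s$ with $a_s\ne0$, $\mathbf a(\lambda)=\sum_{k=-r}^sa_k\lambda^k$. For $n>r+s$, $C_n(\mathbf a)$ is the circulant matrix with $(i,j)$ entry $a_k$ if $j-i\equiv k\pmod n$ for some $k\in\{-r,\dots,s\}$, $0$ otherwise; $R'_n(z)=(z-C_n(\mathbf a))^{-1}$; $F_n$ is the Fourier matrix $(F_n)_{ij}=n^{-1/2}e^{2i\pi(i-1)(j-1)/n}$; $U_n$ is a deterministic unitary matrix. $D_r$ upper triangular with $(D_r)_{pq}=a_{-r+q-p}$ ($q\ge p$); $E_s$ lower triangular with $(E_s)_{pq}=a_{s-p+q}$ ($p\ge q$); $P_n\in M_{n,r+s}(\mathbb C)$ has block rows (heights $r,n-r-s,s$) $(0_{r\times s}\ I_r)$,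 $0$, $(E_s\ 0_{s\times r})$; $Q_n\in M_{r+s,n}(\mathbb C)$ has block rows (heights $s,r$) $(I_s\ 0\ 0_{s\times r})$, $(0_{r\times s}\ 0\ D_r)$. $\mathcal F(\omega)=(\omega^{p-q})_{p,q\le r+s}$, $\mathcal D=\mathrm{diag}(I_s,D_r)$, $\mathcal E=\mathrm{diag}(E_s,I_r)$. Finite-$n$ quantities: $\theta_n(z,z')=\frac1n\operatorname{Tr}R'_n(z)R'_n(z')^*$, $\mathcal A_n(z,z')=Q_nR'_n(z)R'_n(z')^*Q_n^*$, $\mathcal B_n(z,z')=P_n^*R'_n(z')^*R'_n(z)P_n$, $\theta'_n(z,z')=\frac1n\operatorname{Tr}U_n^*R'_n(z)U_nU_n^\intercal R'_n(z')^\intercal\bar U_n$, $\mathcal A'_n(z,z')=Q_nR'_n(z)U_nU_n^\intercal R'_n(z')^\intercal Q_n^\intercal$, $\mathcal B'_n(z,z')=P_n^\intercal R'_n(z')^\intercal\bar U_nU_n^*R'_n(z)P_n$. Limits: write $\oint g(\omega)d\omega$ for $\frac1{2\pi}\int_0^{2\pi}g(e^{it})e^{it}dt$. $\theta(z,z')=\oint\frac{d\omega}{\omega(z-\mathbf a(\omega))\overline{(z'-\mathbf a(\omega))}}$, $\mathcal A(z,z')=\mathcal D\oint\mathrm{diag}(I_s,\omega^{-(r+s)}I_r)\mathcal F(\omega)\mathrm{diag}(I_s,\omega^{r+s}I_r)\frac{d\omega}{\omega(z-\mathbf a(\omega))\overline{(z'-\mathbf a(\omega))}}\mathcal D^*$,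 $\mathcal B(z,z')=\mathcal E^*\oint\mathcal F(\omega)\frac{d\omega}{\omega(z-\mathbf a(\omega))\overline{(z'-\mathbf a(\omega))}}\mathcal E$; for $\varepsilon\in\{\pm1\}$, $\theta_\varepsilon(z,z')=\oint\frac{d\omega}{\omega(z-\mathbf a(\omega))(z'-\mathbf a(\omega^\varepsilon))}$, $\mathcal A_\varepsilon(z,z')=\mathcal D\oint\mathrm{diag}(I_s,\omega^{-(r+s)}I_r)\mathcal F_\varepsilon(\omega)\mathrm{diag}(I_s,\omega^{-\varepsilon(r+s)}I_r)\frac{d\omega}{\omega(z-\mathbf a(\omega))(z'-\mathbf a(\omega^\varepsilon))}\mathcal D^\intercal$ with $\mathcal F_{-1}=\mathcal F$, $\mathcal F_1(\omega)_{pq}=\omega^{p+q-2}$; $\mathcal B_\varepsilon(z,z')=\mathcal E^\intercal\oint\mathcal F'_\varepsilon(\omega)\frac{d\omega}{\omega(z-\mathbf a(\omega))(z'-\mathbf a(\omega^\varepsilon))}\mathcal E$ with $\mathcal F'_{-1}=\mathcal F$, $\mathcal F'_1(\omega)_{pq}=\omega^{2s+2-(p+q)}$. *)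

theory Defs
  imports "HOL-Analysis.Analysis" "Jordan_Normal_Form.Gauss_Jordan_Elimination"
begin

text \<open>Matrices are Jordan_Normal_Form matrices with 0-based indices. The coefficient
  sequence a_{-r},...,a_s is a function  a :: int => complex  (values outside -r..s unused).\<close>

definition symb :: "nat \<Rightarrow> nat \<Rightarrow> (int \<Rightarrow> complex) \<Rightarrow> complex \<Rightarrow> complex" where
  "symb r s a w = (\<Sum>k\<in>{-int r..int s}. a k * w powi k)"

text \<open>Circulant matrix C_n(a): entry (i,j) is a_k where j - i = k (mod n), k in -r..s
  (for n > r+s at most one such k exists, so the sum has at most one nonzero term).\<close>
definition circ :: "nat \<Rightarrow> nat \<Rightarrow> (int \<Rightarrow> complex) \<Rightarrow> nat \<Rightarrow> complex mat" where
  "circ r s a n = mat n n (\<lambda>(i,j). \<Sum>k\<in>{-int r..int s}.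
      if (int j - int i) mod int n = k mod int n then a k else 0)"

definition resolv :: "nat \<Rightarrow> nat \<Rightarrow> (int \<Rightarrow> complex) \<Rightarrow> nat \<Rightarrow> complex \<Rightarrow> complex mat" where
  "resolv r s a n z = the (mat_inverse (z \<cdot>\<^sub>m 1\<^sub>m n - circ r s a n))"

definition adj :: "complex mat \<Rightarrow> complex mat" where
  "adj A = transpose_mat (map_mat cnj A)"

definition cmat :: "complex mat \<Rightarrow> complex mat" where
  "cmat A = map_mat cnj A"

definition tr :: "complex mat \<Rightarrow> complex" where
  "tr A = (\<Sum>i<dim_row A. A $$ (i,i))"

definition fourier :: "nat \<Rightarrow> complex mat" where
  "fourier n = mat n n (\<lambda>(i,j). exp (2 * \<i> * pi * of_nat i * of_nat j / of_nat n) / sqrt (real n))"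

definition unitary_cmat :: "nat \<Rightarrow> complex mat \<Rightarrow> bool" where
  "unitary_cmat n U \<longleftrightarrow> U \<in> carrier_mat n n \<and> U * adj U = 1\<^sub>m n \<and> adj U * U = 1\<^sub>m n"

definition real_orthogonal_cmat :: "nat \<Rightarrow> complex mat \<Rightarrow> bool" where
  "real_orthogonal_cmat n U \<longleftrightarrow> U \<in> carrier_mat n n \<and> (\<forall>i<n. \<forall>j<n. U $$ (i,j) \<in> \<real>)
     \<and> U * transpose_mat U = 1\<^sub>m n \<and> transpose_mat U * U = 1\<^sub>m n"

definition Dr :: "nat \<Rightarrow> (int \<Rightarrow> complex) \<Rightarrow> complex mat" where
  "Dr r a = mat r r (\<lambda>(p,q). if q \<ge> p then a (- int r + int q - int p) else 0)"

definition Es :: "nat \<Rightarrow> (int \<Rightarrow> complex) \<Rightarrow> complex mat" where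
  "Es s a = mat s s (\<lambda>(p,q). if p \<ge> q then a (int s - int p + int q) else 0)"

definition Pn :: "nat \<Rightarrow> nat \<Rightarrow> (int \<Rightarrow> complex) \<Rightarrow> nat \<Rightarrow> complex mat" where
  "Pn r s a n = mat n (r+s) (\<lambda>(i,j).
      if i < r then (if j = s + i then 1 else 0)
      else if i < n - s then 0
      else (if j < s then Es s a $$ (i - (n - s), j) else 0))"

definition Qn :: "nat \<Rightarrow> nat \<Rightarrow> (int \<Rightarrow> complex) \<Rightarrow> nat \<Rightarrow> complex mat" where
  "Qn r s a n = mat (r+s) n (\<lambda>(i,j).
      if i < s then (if j = i then 1 else 0)
      else (if j \<ge> n - r then Dr r a $$ (i - s, j - (n - r)) else 0))"

definition calD :: "nat \<Rightarrow> nat \<Rightarrow> (int \<Rightarrow> complex) \<Rightarrow> complex mat" where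
  "calD r s a = mat (r+s) (r+s) (\<lambda>(p,q).
      if p < s \<and> q < s then (if p = q then 1 else 0)
      else if s \<le> p \<and> s \<le> q then Dr r a $$ (p - s, q - s) else 0)"

definition calE :: "nat \<Rightarrow> nat \<Rightarrow> (int \<Rightarrow> complex) \<Rightarrow> complex mat" where
  "calE r s a = mat (r+s) (r+s) (\<lambda>(p,q).
      if p < s \<and> q < s then Es s a $$ (p, q)
      else if s \<le> p \<and> s \<le> q then (if p = q then 1 else 0) else 0)"

definition oint :: "(complex \<Rightarrow> complex) \<Rightarrow> complex" where
  "oint g = integral {0..2*pi} (\<lambda>t. g (cis t) * cis t) / (2 * pi)"

definition moint :: "nat \<Rightarrow> (complex \<Rightarrow> complex mat) \<Rightarrow> complex mat" where
  "moint k G = mat k k (\<lambda>(p,q). oint (\<lambda>\<omega>. G \<omega> $$ (p,q)))"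

definition dgm :: "nat \<Rightarrow> nat \<Rightarrow> complex \<Rightarrow> complex mat" where
  "dgm r s c = mat (r+s) (r+s) (\<lambda>(p,q). if p = q then (if p < s then 1 else c) else 0)"

text \<open>F(omega), F_1(omega), F'_1(omega) with 1-based exponents translated to 0-based indices.\<close>
definition calF :: "nat \<Rightarrow> complex \<Rightarrow> complex mat" where
  "calF k \<omega> = mat k k (\<lambda>(p,q). \<omega> powi (int p - int q))"

definition calF1 :: "nat \<Rightarrow> complex \<Rightarrow> complex mat" where
  "calF1 k \<omega> = mat k k (\<lambda>(p,q). \<omega> powi (int (p+1) + int (q+1) - 2))"

definition calF1' :: "nat \<Rightarrow> nat \<Rightarrow> complex \<Rightarrow> complex mat" where
  "calF1' k s \<omega> = mat k k (\<lambda>(p,q). \<omega> powi (2 * int s + 2 - (int (p+1) + int (q+1))))"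

definition calFeps :: "int \<Rightarrow> nat \<Rightarrow> complex \<Rightarrow> complex mat" where
  "calFeps e k \<omega> = (if e = -1 then calF k \<omega> else calF1 k \<omega>)"

definition calFeps' :: "int \<Rightarrow> nat \<Rightarrow> nat \<Rightarrow> complex \<Rightarrow> complex mat" where
  "calFeps' e k s \<omega> = (if e = -1 then calF k \<omega> else calF1' k s \<omega>)"

definition theta_n where
  "theta_n r s a n z z' = tr (resolv r s a n z * adj (resolv r s a n z')) / of_nat n"

definition A_n where
  "A_n r s a n z z' = Qn r s a n * resolv r s a n z * adj (resolv r s a n z') * adj (Qn r s a n)"

definition B_n where
  "B_n r s a n z z' = adj (Pn r s a n) * adj (resolv r s a n z') * resolv r s a n z * Pn r s a n"

definition theta'_n where
  "theta'_n r s a U n z z' = tr (adj U * resolv r s a n z * U * transpose_mat U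
       * transpose_mat (resolv r s a n z') * cmat U) / of_nat n"

definition A'_n where
  "A'_n r s a U n z z' = Qn r s a n * resolv r s a n z * U * transpose_mat U
       * transpose_mat (resolv r s a n z') * transpose_mat (Qn r s a n)"

definition B'_n where
  "B'_n r s a U n z z' = transpose_mat (Pn r s a n) * transpose_mat (resolv r s a n z')
       * cmat U * adj U * resolv r s a n z * Pn r s a n"

definition theta_lim where
  "theta_lim r s a z z' = oint (\<lambda>\<omega>. 1 / (\<omega> * (z - symb r s a \<omega>) * cnj (z' - symb r s a \<omega>)))"

definition A_lim where
  "A_lim r s a z z' = calD r s a *
     moint (r+s) (\<lambda>\<omega>. (1 / (\<omega> * (z - symb r s a \<omega>) * cnj (z' - symb r s a \<omega>))) \<cdot>\<^sub>m
        (dgm r s (\<omega> powi (- int (r+s))) * calF (r+s) \<omega> * dgm r s (\<omega> powi (int (r+s)))))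
     * adj (calD r s a)"

definition B_lim where
  "B_lim r s a z z' = adj (calE r s a) *
     moint (r+s) (\<lambda>\<omega>. (1 / (\<omega> * (z - symb r s a \<omega>) * cnj (z' - symb r s a \<omega>))) \<cdot>\<^sub>m calF (r+s) \<omega>)
     * calE r s a"

definition theta_eps where
  "theta_eps e r s a z z' = oint (\<lambda>\<omega>. 1 / (\<omega> * (z - symb r s a \<omega>) * (z' - symb r s a (\<omega> powi e))))"

definition A_eps where
  "A_eps e r s a z z' = calD r s a *
     moint (r+s) (\<lambda>\<omega>. (1 / (\<omega> * (z - symb r s a \<omega>) * (z' - symb r s a (\<omega> powi e)))) \<cdot>\<^sub>m
        (dgm r s (\<omega> powi (- int (r+s))) * calFeps e (r+s) \<omega> * dgm r s (\<omega> powi (- e * int (r+s)))))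
     * transpose_mat (calD r s a)"

definition B_eps where
  "B_eps e r s a z z' = transpose_mat (calE r s a) *
     moint (r+s) (\<lambda>\<omega>. (1 / (\<omega> * (z - symb r s a \<omega>) * (z' - symb r s a (\<omega> powi e)))) \<cdot>\<^sub>m calFeps' e (r+s) s \<omega>)
     * calE r s a"

definition unif_conv :: "complex set \<Rightarrow> (nat \<Rightarrow> complex \<Rightarrow> complex \<Rightarrow> complex) \<Rightarrow> (complex \<Rightarrow> complex \<Rightarrow> complex) \<Rightarrow> bool" where
  "unif_conv \<Gamma> f g \<longleftrightarrow> (\<forall>\<epsilon>>0. \<exists>N. \<forall>n\<ge>N. \<forall>z\<in>\<Gamma>. \<forall>z'\<in>\<Gamma>. norm (f n z z' - g z z') < \<epsilon>)"

text \<open>For fixed-size (k x k) matrices, entrywise uniform convergence (equivalent to uniform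
  convergence in any matrix norm).\<close>
definition unif_conv_mat :: "nat \<Rightarrow> complex set \<Rightarrow> (nat \<Rightarrow> complex \<Rightarrow> complex \<Rightarrow> complex mat) \<Rightarrow> (complex \<Rightarrow> complex \<Rightarrow> complex mat) \<Rightarrow> bool" where
  "unif_conv_mat k \<Gamma> F G \<longleftrightarrow> (\<forall>p<k. \<forall>q<k. unif_conv \<Gamma> (\<lambda>n z z'. F n z z' $$ (p,q)) (\<lambda>z z'. G z z' $$ (p,q)))"

end

theory Submission
  imports Defs
begin

definition om :: "nat \<Rightarrow> nat \<Rightarrow> complex" where
  "om n m = cis (2 * pi * real m / real n)"

lemma cis_eq_1_int:
  assumes "cis x = 1" shows "\<exists>k::int. x = of_int k * 2 * pi"
proof -
  have "cos x = 1" using assms by (metis cis.sel(1) one_complex.sel(1))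
  thus ?thesis using cos_one_2pi_int by blast
qed

lemma sum_roots:
  assumes n: "n > 0"
  shows "(\<Sum>m<n. cis (2 * pi * real m * of_int d / real n)) = (if int n dvd d then of_nat n else 0)"
proof -
  define q where "q = cis (2 * pi * of_int d / real n)"
  have terms: "cis (2 * pi * real m * of_int d / real n) = q ^ m" for m
  proof -
    have "q ^ m = cis (real m * (2 * pi * of_int d / real n))" by (simp only: q_def Complex.DeMoivre)
    also have "\<dots> = cis (2 * pi * real m * of_int d / real n)" by (rule arg_cong[where f=cis]) simp
    finally
    show ?thesis by simp
  qed
  have qn: "q ^ n = 1"
  proof -
    have "q ^ n = cis (2 * pi * of_int d)" unfolding q_def Complex.DeMoivre using n by simp
    also have "\<dots> = 1" by (rule cis_multiple_2pi) simp
    finally show ?thesis .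
  qed
  show ?thesis
  proof (cases "int n dvd d")
    case True
    then obtain k where k: "d = int n * k" by blast
    have e: "2 * pi * of_int d / real n = 2 * pi * of_int k" using n k by simp
    have "q = 1" unfolding q_def e by (rule cis_multiple_2pi) simp
    thus ?thesis using True by (simp add: terms)
  next
    case False
    have "q \<noteq> 1"
    proof
      assume "q = 1"
      then obtain k :: int where "2 * pi * of_int d / real n = of_int k * 2 * pi"
        using cis_eq_1_int unfolding q_def by blast
      hence "of_int d = real n * of_int k" using n by (simp add: field_simps)
      hence "d = int n * k" by (metis of_int_eq_iff of_int_mult of_int_of_nat_eq)
      thus False using False by simp
    qed
    thus ?thesis using False qn by (simp add: terms sum_gp_strict)
  qed
qed

lemma om_powi: "om n m powi d = cis (2 * pi * real m * of_int d / real n)"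
  unfolding om_def cis_power_int by (simp add: algebra_simps)

lemma om_nz[simp]: "om n m \<noteq> 0" unfolding om_def by simp
lemma norm_om[simp]: "norm (om n m) = 1" unfolding om_def by simp
lemma om_sphere[simp]: "om n m \<in> sphere 0 1" by simp
lemma cnj_om: "cnj (om n m) = inverse (om n m)" unfolding om_def by (simp add: cis_cnj)

lemma om_powi_period:
  assumes "n > 0" shows "om n m powi (d + int n * k) = om n m powi d"
proof -
  have "om n m powi (d + int n * k) = om n m powi d * om n m powi (int n * k)"
    by (simp add: power_int_add)
  moreover have "om n m powi (int n * k) = 1"
  proof -
    have "om n m powi (int n * k) = cis (2 * pi * (real m * of_int k))"
      unfolding om_powi using assms by (simp add: field_simps)
    also have "\<dots> = 1" by (rule cis_multiple_2pi) simp
    finally show ?thesis .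
  qed
  ultimately show ?thesis by simp
qed

lemma orth:
  assumes n: "n > 0" and m: "m < n" and m': "m' < n"
  shows "(\<Sum>l<n. om n m powi (- int l) * om n m' powi (int l)) = (if m = m' then of_nat n else 0)"
proof -
  have "(\<Sum>l<n. om n m powi (- int l) * om n m' powi (int l))
      = (\<Sum>l<n. cis (2 * pi * real l * of_int (int m' - int m) / real n))"
  proof (rule sum.cong)
    fix l assume "l \<in> {..<n}"
    have "om n m powi (- int l) * om n m' powi (int l) = cis (2 * pi * real m * of_int (- int l) / real n) * cis (2 * pi * real m' * of_int (int l) / real n)"
      by (simp only: om_powi)
    also have "\<dots> = cis (2 * pi * real l * of_int (int m' - int m) / real n)"
      unfolding cis_mult
    proof (rule arg_cong[where f=cis])
      have "of_int (int m' - int m) = real m' - real m" by simp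
      thus "2 * pi * real m * of_int (- int l) / real n + 2 * pi * real m' * of_int (int l) / real n =
        2 * pi * real l * of_int (int m' - int m) / real n"
        by (simp add: divide_simps algebra_simps)
    qed
    finally show "om n m powi (- int l) * om n m' powi (int l) = cis (2 * pi * real l * of_int (int m' - int m) / real n)" .
  qed simp
  also have "\<dots> = (if int n dvd (int m' - int m) then of_nat n else 0)" by (rule sum_roots[OF n])
  also have "(int n dvd (int m' - int m)) = (m = m')"
  proof
    assume dv: "int n dvd (int m' - int m)"
    have lt: "\<bar>int m' - int m\<bar> < int n" using m m' by auto
    have "int m' - int m = 0"
    proof (rule ccontr)
      assume nz: "int m' - int m \<noteq> 0"
      have "\<bar>int n\<bar> \<le> \<bar>int m' - int m\<bar>" by (rule dvd_imp_le_int[OF nz dv])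
      thus False using lt by simp
    qed
    thus "m = m'" by simp
  qed simp
  finally show ?thesis .
qed

lemma powi_split: "(x::complex) \<noteq> 0 \<Longrightarrow> x powi (a + b) = x powi a * x powi b"
  by (simp add: power_int_add)

lemma cnj_powi_unit: "norm (x::complex) = 1 \<Longrightarrow> cnj x powi d = x powi (- d)"
proof -
  assume "norm x = 1"
  hence "cnj x = inverse x" by (metis complex_norm_square inverse_unique mult.commute mult_1 of_real_1 one_power2 power2_eq_square)
  thus ?thesis by (simp add: power_int_minus power_int_inverse)
qed

lemma om_refl: assumes "n > 0" "m < n" shows "om n ((n - m) mod n) = cnj (om n m)"
proof (cases "m = 0")
  case True thus ?thesis by (simp add: om_def)
next
  case False
  hence "(n - m) mod n = n - m" using assms by simp
  moreover have "cis (2 * pi * real (n - m) / real n) = cis (- (2 * pi * real m / real n))"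
  proof -
    have "2 * pi * real (n - m) / real n = 2 * pi + (- (2 * pi * real m / real n))"
      using assms by (simp add: of_nat_diff field_simps)
    hence "cis (2 * pi * real (n - m) / real n) = cis (2 * pi + (- (2 * pi * real m / real n)))"
      by (simp only:)
    also have "\<dots> = cis (2 * pi) * cis (- (2 * pi * real m / real n))" by (simp only: cis_mult)
    finally show ?thesis by simp
  qed
  ultimately show ?thesis by (simp add: om_def cis_cnj)
qed

lemma sum_refl:
  assumes n: "n > 0"
  shows "(\<Sum>m<n. F (om n m)) = (\<Sum>m<n. F (cnj (om n m)))"
proof -
  define h where "h m = (n - m) mod n" for m
  have hh: "h (h m) = m" if "m < n" for m
    using that n unfolding h_def
    by (cases "m = 0") (auto simp: mod_if)
  have hr: "h m < n" for m using n unfolding h_def by simp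
  have bij: "bij_betw h {..<n} {..<n}"
    by (rule bij_betw_byWitness[where f'=h]) (auto simp: hh hr)
  have "(\<Sum>m<n. F (cnj (om n m))) = (\<Sum>m<n. F (om n (h m)))"
    by (rule sum.cong) (auto simp: h_def om_refl[OF n])
  also have "\<dots> = (\<Sum>m<n. F (om n m))" by (rule sum.reindex_bij_betw[OF bij])
  finally show ?thesis by simp
qed

definition rho :: "nat \<Rightarrow> (complex \<Rightarrow> complex) \<Rightarrow> int \<Rightarrow> complex" where
  "rho n f d = (\<Sum>m<n. f (om n m) * om n m powi d) / of_nat n"

lemma rho_period: assumes "n > 0" shows "rho n f (d + int n * k) = rho n f d"
  unfolding rho_def using om_powi_period[OF assms] by simp

lemma rho_cong: assumes "\<And>m. m < n \<Longrightarrow> f (om n m) = g (om n m)" shows "rho n f d = rho n g d"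
  unfolding rho_def using assms by (auto intro!: sum.cong)

lemma rho_refl: assumes n: "n > 0" shows "rho n f (- d) = rho n (\<lambda>w. f (cnj w)) d"
proof -
  have "(\<Sum>m<n. f (om n m) * om n m powi (- d)) = (\<Sum>m<n. f (cnj (om n m)) * cnj (om n m) powi (- d))"
    by (rule sum_refl[OF n])
  also have "\<dots> = (\<Sum>m<n. f (cnj (om n m)) * om n m powi d)"
    by (simp add: cnj_powi_unit)
  finally show ?thesis unfolding rho_def by simp
qed

lemma cnj_rho: "cnj (rho n f d) = rho n (\<lambda>w. cnj (f w)) (- d)"
  unfolding rho_def by (simp add: cnj_powi_unit)

lemma rho_pow: assumes n: "n > 0"
  shows "rho n (\<lambda>w. 1) d = (if int n dvd d then 1 else 0)"
proof -
  have "(\<Sum>m<n. om n m powi d) = (\<Sum>m<n. cis (2 * pi * real m * of_int d / real n))"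
    by (simp only: om_powi)
  thus ?thesis unfolding rho_def using sum_roots[OF n, of d] n by auto
qed

lemma conv1:
  assumes n: "n > 0"
  shows "(\<Sum>l<n. rho n f (a - int l) * rho n g (int l + b)) = rho n (\<lambda>w. f w * g w) (a + b)"
proof -
  let ?w = "om n"
  define X where "X l = (\<Sum>m<n. \<Sum>m'<n. (f (?w m) * g (?w m') * ?w m powi a * ?w m' powi b) *
          (?w m powi (- int l) * ?w m' powi (int l)))" for l
  have per: "rho n f (a - int l) * rho n g (int l + b) = X l / (of_nat n * of_nat n)" for l
  proof -
    have "rho n f (a - int l) * rho n g (int l + b) = (\<Sum>m<n. f (?w m) * ?w m powi (a - int l)) / of_nat n * ((\<Sum>m<n. g (?w m) * ?w m powi (int l + b)) / of_nat n)"
      unfolding rho_def ..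
    also
    have "(\<Sum>m<n. f (?w m) * ?w m powi (a - int l)) / of_nat n * ((\<Sum>m<n. g (?w m) * ?w m powi (int l + b)) / of_nat n)
      = ((\<Sum>m<n. f (?w m) * ?w m powi (a - int l)) * (\<Sum>m<n. g (?w m) * ?w m powi (int l + b))) / (of_nat n * of_nat n)"
      by simp
    also have "\<dots>
       = (\<Sum>m<n. \<Sum>m'<n. (f (?w m) * ?w m powi (a - int l)) * (g (?w m') * ?w m' powi (int l + b))) / (of_nat n * of_nat n)"
      by (simp only: sum_product)
    also have "\<dots> = (\<Sum>m<n. \<Sum>m'<n. (f (?w m) * g (?w m') * ?w m powi a * ?w m' powi b) *
          (?w m powi (- int l) * ?w m' powi (int l))) / (of_nat n * of_nat n)"
    proof (intro arg_cong[where f="\<lambda>x. x / (of_nat n * of_nat n)"] sum.cong refl)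
      fix m m'
      have "?w m powi (a - int l) = ?w m powi a * ?w m powi (- int l)"
        using powi_split[of "?w m" a "- int l"] by simp
      moreover have "?w m' powi (int l + b) = ?w m' powi (int l) * ?w m' powi b"
        using powi_split[of "?w m'" "int l" b] by simp
      ultimately show "(f (?w m) * ?w m powi (a - int l)) * (g (?w m') * ?w m' powi (int l + b)) =
          (f (?w m) * g (?w m') * ?w m powi a * ?w m' powi b) * (?w m powi (- int l) * ?w m' powi (int l))"
        by (simp add: algebra_simps)
    qed
    finally show ?thesis unfolding X_def .
  qed
  have "(\<Sum>l<n. X l) = (\<Sum>m<n. \<Sum>m'<n. (f (?w m) * g (?w m') * ?w m powi a * ?w m' powi b) *
          (\<Sum>l<n. ?w m powi (- int l) * ?w m' powi (int l)))"
  proof -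
    have "(\<Sum>l<n. X l) = (\<Sum>m<n. \<Sum>m'<n. \<Sum>l<n. (f (?w m) * g (?w m') * ?w m powi a * ?w m' powi b) *
          (?w m powi (- int l) * ?w m' powi (int l)))"
      unfolding X_def by (rule trans[OF sum.swap], rule sum.cong[OF refl], rule sum.swap)
    thus ?thesis by (simp only: sum_distrib_left)
  qed
  also have "\<dots> = (\<Sum>m<n. \<Sum>m'<n. (f (?w m) * g (?w m') * ?w m powi a * ?w m' powi b) *
          (if m = m' then of_nat n else 0))"
    by (intro sum.cong refl) (simp add: orth[OF n] del: power_int_of_nat)
  also have "\<dots> = (\<Sum>m<n. (f (?w m) * g (?w m) * ?w m powi a * ?w m powi b) * of_nat n)"
    by (simp add: if_distrib[of "\<lambda>x. _ * x"] sum.delta cong: if_cong)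
  also have "\<dots> = (\<Sum>m<n. f (?w m) * g (?w m) * ?w m powi (a + b)) * of_nat n"
    by (simp add: sum_distrib_right powi_split mult.assoc)
  finally have SX: "(\<Sum>l<n. X l) = (\<Sum>m<n. f (?w m) * g (?w m) * ?w m powi (a + b)) * of_nat n" .
  have "(\<Sum>l<n. rho n f (a - int l) * rho n g (int l + b)) = (\<Sum>l<n. X l / (of_nat n * of_nat n))"
    using per by simp
  also have "\<dots> = (\<Sum>l<n. X l) / (of_nat n * of_nat n)" by (rule sum_divide_distrib[symmetric])
  also have "\<dots> = (\<Sum>m<n. f (?w m) * g (?w m) * ?w m powi (a + b)) / of_nat n"
    unfolding SX using n by simp
  finally show ?thesis unfolding rho_def using n by simp
qed

lemma mult_entry:
  assumes "i < dim_row A" "j < dim_col B" "dim_col A = dim_row B"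
  shows "(A * B) $$ (i, j) = (\<Sum>l<dim_row B. A $$ (i, l) * B $$ (l, j))"
  using assms by (simp add: scalar_prod_def row_def col_def atLeast0LessThan)

definition Km :: "nat \<Rightarrow> (complex \<Rightarrow> complex) \<Rightarrow> complex mat" where
  "Km n f = mat n n (\<lambda>(i,j). rho n f (int i - int j))"

definition Lm :: "nat \<Rightarrow> (complex \<Rightarrow> complex) \<Rightarrow> complex mat" where
  "Lm n f = mat n n (\<lambda>(i,j). rho n f (int i + int j))"

lemma Km_dims[simp]: "dim_row (Km n f) = n" "dim_col (Km n f) = n" "Km n f \<in> carrier_mat n n"
  unfolding Km_def by auto
lemma Lm_dims[simp]: "dim_row (Lm n f) = n" "dim_col (Lm n f) = n" "Lm n f \<in> carrier_mat n n"
  unfolding Lm_def by auto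
lemma Km_index[simp]: "i < n \<Longrightarrow> j < n \<Longrightarrow> Km n f $$ (i,j) = rho n f (int i - int j)"
  unfolding Km_def by simp
lemma Lm_index[simp]: "i < n \<Longrightarrow> j < n \<Longrightarrow> Lm n f $$ (i,j) = rho n f (int i + int j)"
  unfolding Lm_def by simp

lemma Km_cong: "(\<And>m. m < n \<Longrightarrow> f (om n m) = g (om n m)) \<Longrightarrow> Km n f = Km n g"
  unfolding Km_def using rho_cong by metis
lemma Lm_cong: "(\<And>m. m < n \<Longrightarrow> f (om n m) = g (om n m)) \<Longrightarrow> Lm n f = Lm n g"
  unfolding Lm_def using rho_cong by metis

lemma Km_Km: assumes n: "n > 0" shows "Km n f * Km n g = Km n (\<lambda>w. f w * g w)"
proof (rule eq_matI)
  fix i j assume "i < dim_row (Km n (\<lambda>w. f w * g w))" "j < dim_col (Km n (\<lambda>w. f w * g w))"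
  hence ij: "i < n" "j < n" by auto
  have "(Km n f * Km n g) $$ (i,j) = (\<Sum>l<n. rho n f (int i - int l) * rho n g (int l + (- int j)))"
    using ij by (subst mult_entry) auto
  also have "\<dots> = rho n (\<lambda>w. f w * g w) (int i + (- int j))" by (rule conv1[OF n])
  finally show "(Km n f * Km n g) $$ (i,j) = Km n (\<lambda>w. f w * g w) $$ (i,j)" using ij by simp
qed auto

lemma Km_Lm: assumes n: "n > 0" shows "Km n f * Lm n g = Lm n (\<lambda>w. f w * g w)"
proof (rule eq_matI)
  fix i j assume "i < dim_row (Lm n (\<lambda>w. f w * g w))" "j < dim_col (Lm n (\<lambda>w. f w * g w))"
  hence ij: "i < n" "j < n" by auto
  have "(Km n f * Lm n g) $$ (i,j) = (\<Sum>l<n. rho n f (int i - int l) * rho n g (int l + int j))"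
    using ij by (subst mult_entry) auto
  also have "\<dots> = rho n (\<lambda>w. f w * g w) (int i + int j)" by (rule conv1[OF n])
  finally show "(Km n f * Lm n g) $$ (i,j) = Lm n (\<lambda>w. f w * g w) $$ (i,j)" using ij by simp
qed auto

lemma rho_refl': assumes n: "n > 0" shows "rho n f d = rho n (\<lambda>w. f (cnj w)) (- d)"
  using rho_refl[OF n, of f "- d"] by simp

lemma Lm_Km: assumes n: "n > 0" shows "Lm n f * Km n g = Lm n (\<lambda>w. f w * g (cnj w))"
proof (rule eq_matI)
  fix i j assume "i < dim_row (Lm n (\<lambda>w. f w * g (cnj w)))" "j < dim_col (Lm n (\<lambda>w. f w * g (cnj w)))"
  hence ij: "i < n" "j < n" by auto
  have "(Lm n f * Km n g) $$ (i,j) = (\<Sum>l<n. rho n f (int i + int l) * rho n g (int l + (- int j)))"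
    using ij by (subst mult_entry) auto
  also have "\<dots> = (\<Sum>l<n. rho n (\<lambda>w. f (cnj w)) (- int i - int l) * rho n g (int l + (- int j)))"
    by (intro sum.cong refl) (subst rho_refl'[OF n], simp)
  also have "\<dots> = rho n (\<lambda>w. f (cnj w) * g w) (- int i + (- int j))" by (rule conv1[OF n])
  also have "\<dots> = rho n (\<lambda>w. f w * g (cnj w)) (int i + int j)"
    by (subst rho_refl'[OF n]) simp
  finally show "(Lm n f * Km n g) $$ (i,j) = Lm n (\<lambda>w. f w * g (cnj w)) $$ (i,j)" using ij by simp
qed auto

lemma Lm_Lm: assumes n: "n > 0" shows "Lm n f * Lm n g = Km n (\<lambda>w. f w * g (cnj w))"
proof (rule eq_matI)
  fix i j assume "i < dim_row (Km n (\<lambda>w. f w * g (cnj w)))" "j < dim_col (Km n (\<lambda>w. f w * g (cnj w)))"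
  hence ij: "i < n" "j < n" by auto
  have "(Lm n f * Lm n g) $$ (i,j) = (\<Sum>l<n. rho n f (int i + int l) * rho n g (int l + int j))"
    using ij by (subst mult_entry) auto
  also have "\<dots> = (\<Sum>l<n. rho n (\<lambda>w. f (cnj w)) (- int i - int l) * rho n g (int l + int j))"
    by (intro sum.cong refl) (subst rho_refl'[OF n], simp)
  also have "\<dots> = rho n (\<lambda>w. f (cnj w) * g w) (- int i + int j)" by (rule conv1[OF n])
  also have "\<dots> = rho n (\<lambda>w. f w * g (cnj w)) (int i - int j)"
    by (subst rho_refl'[OF n]) simp
  finally show "(Lm n f * Lm n g) $$ (i,j) = Km n (\<lambda>w. f w * g (cnj w)) $$ (i,j)" using ij by simp
qed auto

lemma Km_one: assumes n: "n > 0" shows "Km n (\<lambda>w. 1) = 1\<^sub>m n"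
proof (rule eq_matI)
  fix i j assume "i < dim_row (1\<^sub>m n :: complex mat)" "j < dim_col (1\<^sub>m n :: complex mat)"
  hence ij: "i < n" "j < n" by auto
  have "int n dvd (int i - int j) \<longleftrightarrow> i = j"
  proof
    assume dv: "int n dvd (int i - int j)"
    have lt: "\<bar>int i - int j\<bar> < int n" using ij by auto
    have "int i - int j = 0"
    proof (rule ccontr)
      assume nz: "int i - int j \<noteq> 0"
      have "\<bar>int n\<bar> \<le> \<bar>int i - int j\<bar>" by (rule dvd_imp_le_int[OF nz dv])
      thus False using lt by simp
    qed
    thus "i = j" by simp
  qed simp
  thus "Km n (\<lambda>w. 1) $$ (i,j) = 1\<^sub>m n $$ (i,j)" using ij by (simp add: rho_pow[OF n])
qed auto

lemma tr_Km: assumes n: "n > 0" shows "tr (Km n f) = (\<Sum>m<n. f (om n m))"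
proof -
  have "tr (Km n f) = (\<Sum>i<n. rho n f 0)" unfolding tr_def by simp
  also have "\<dots> = of_nat n * rho n f 0" by simp
  also have "\<dots> = (\<Sum>m<n. f (om n m))" unfolding rho_def using n by simp
  finally show ?thesis .
qed

lemma adj_Km: assumes n: "n > 0" shows "adj (Km n f) = Km n (\<lambda>w. cnj (f w))"
  by (rule eq_matI) (auto simp: adj_def cnj_rho)

lemma transpose_Km: assumes n: "n > 0" shows "transpose_mat (Km n f) = Km n (\<lambda>w. f (cnj w))"
  by (rule eq_matI) (auto simp: rho_refl'[OF n, of f "int _ - int _"])

lemma transpose_Lm: "transpose_mat (Lm n f) = Lm n f"
  by (rule eq_matI) (auto simp: add.commute)

lemma cmat_Lm: assumes n: "n > 0" shows "cmat (Lm n f) = Lm n (\<lambda>w. cnj (f (cnj w)))"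
proof (rule eq_matI)
  fix i j assume "i < dim_row (Lm n (\<lambda>w. cnj (f (cnj w))))" "j < dim_col (Lm n (\<lambda>w. cnj (f (cnj w))))"
  hence ij: "i < n" "j < n" by auto
  have "cnj (rho n f (int i + int j)) = rho n (\<lambda>w. cnj (f w)) (- (int i + int j))" by (rule cnj_rho)
  also have "\<dots> = rho n (\<lambda>w. cnj (f (cnj w))) (int i + int j)" by (rule rho_refl[OF n])
  finally show "cmat (Lm n f) $$ (i, j) = Lm n (\<lambda>w. cnj (f (cnj w))) $$ (i, j)"
    using ij by (simp add: cmat_def)
qed (auto simp: cmat_def)

lemma rho_lin:
  "rho n (\<lambda>w. z - symb r s a w) d = z * rho n (\<lambda>w. 1) d - (\<Sum>k\<in>{-int r..int s}. a k * rho n (\<lambda>w. 1) (k + d))"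
proof -
  let ?w = "om n"
  have "(\<Sum>m<n. (z - symb r s a (?w m)) * ?w m powi d)
      = (\<Sum>m<n. z * ?w m powi d) - (\<Sum>m<n. \<Sum>k\<in>{-int r..int s}. a k * ?w m powi (k + d))"
    by (simp add: left_diff_distrib sum_subtractf symb_def sum_distrib_right powi_split mult.assoc)
  also have "(\<Sum>m<n. \<Sum>k\<in>{-int r..int s}. a k * ?w m powi (k + d)) = (\<Sum>k\<in>{-int r..int s}. a k * (\<Sum>m<n. ?w m powi (k + d)))"
    by (subst sum.swap) (simp add: sum_distrib_left)
  finally show ?thesis unfolding rho_def
    by (simp add: sum_distrib_left diff_divide_distrib sum_divide_distrib)
qed

lemma circ_Km: assumes n: "n > 0"
  shows "z \<cdot>\<^sub>m 1\<^sub>m n - circ r s a n = Km n (\<lambda>w. z - symb r s a w)"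
proof (rule eq_matI)
  fix i j assume "i < dim_row (Km n (\<lambda>w. z - symb r s a w))" "j < dim_col (Km n (\<lambda>w. z - symb r s a w))"
  hence ij: "i < n" "j < n" by auto
  have one: "rho n (\<lambda>w. 1) (int i - int j) = (if i = j then 1 else 0)"
    using Km_one[OF n] ij by (metis Km_index index_one_mat)
  have "(\<Sum>k\<in>{-int r..int s}. a k * rho n (\<lambda>w. 1) (k + (int i - int j)))
     = (\<Sum>k\<in>{-int r..int s}. if (int j - int i) mod int n = k mod int n then a k else 0)"
  proof (rule sum.cong[OF refl])
    fix k
    have "((int j - int i) mod int n = k mod int n) \<longleftrightarrow> int n dvd (int j - int i - k)"
      by (simp add: mod_eq_dvd_iff)
    also have "\<dots> \<longleftrightarrow> int n dvd (k + (int i - int j))"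
      by (metis dvd_minus_iff minus_diff_eq diff_diff_eq2 add.commute diff_add_eq)
    finally show "a k * rho n (\<lambda>w. 1) (k + (int i - int j)) = (if (int j - int i) mod int n = k mod int n then a k else 0)"
      by (simp add: rho_pow[OF n])
  qed
  thus "(z \<cdot>\<^sub>m 1\<^sub>m n - circ r s a n) $$ (i, j) = Km n (\<lambda>w. z - symb r s a w) $$ (i, j)"
    using ij by (simp add: circ_def rho_lin one)
qed (auto simp: circ_def)

lemma inverse_unique_mat:
  fixes X Y :: "complex mat"
  assumes X: "X \<in> carrier_mat n n" and Y: "Y \<in> carrier_mat n n"
    and XY: "X * Y = 1\<^sub>m n" and YX: "Y * X = 1\<^sub>m n"
  shows "the (mat_inverse X) = Y"
proof (cases "mat_inverse X")
  case None
  from mat_inverse(1)[OF X None, of undefined] have "X \<notin> Units (ring_mat TYPE(complex) n undefined)" .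
  moreover have "X \<in> Units (ring_mat TYPE(complex) n undefined)"
    unfolding Units_def using X Y XY YX by (auto simp: ring_mat_simps)
  ultimately show ?thesis by blast
next
  case (Some B)
  from mat_inverse(2)[OF X Some] have B: "X * B = 1\<^sub>m n" "B \<in> carrier_mat n n" by auto
  have "Y = Y * (X * B)" using B Y by simp
  also have "\<dots> = (Y * X) * B" using X Y B by (simp add: assoc_mult_mat)
  also have "\<dots> = B" using YX B by simp
  finally show ?thesis using Some by simp
qed

lemma resolv_Km:
  assumes n: "n > 0" and nz: "\<And>m. m < n \<Longrightarrow> z \<noteq> symb r s a (om n m)"
  shows "resolv r s a n z = Km n (\<lambda>w. 1 / (z - symb r s a w))"
proof -
  have X: "z \<cdot>\<^sub>m 1\<^sub>m n - circ r s a n = Km n (\<lambda>w. z - symb r s a w)" by (rule circ_Km[OF n])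
  have e1: "Km n (\<lambda>w. (z - symb r s a w) * (1 / (z - symb r s a w))) = Km n (\<lambda>w. 1)"
    by (rule Km_cong) (use nz in auto)
  have e2: "Km n (\<lambda>w. (1 / (z - symb r s a w)) * (z - symb r s a w)) = Km n (\<lambda>w. 1)"
    by (rule Km_cong) (use nz in auto)
  show ?thesis unfolding resolv_def X
  proof (rule inverse_unique_mat[of _ n])
    show "Km n (\<lambda>w. z - symb r s a w) * Km n (\<lambda>w. 1 / (z - symb r s a w)) = 1\<^sub>m n"
      by (simp only: Km_Km[OF n] e1 Km_one[OF n])
    show "Km n (\<lambda>w. 1 / (z - symb r s a w)) * Km n (\<lambda>w. z - symb r s a w) = 1\<^sub>m n"
      by (simp only: Km_Km[OF n] e2 Km_one[OF n])
  qed auto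
qed

lemma integral_split:
  fixes f :: "real \<Rightarrow> complex"
  assumes cf: "continuous_on {0..c} f" and c: "c \<ge> 0" and n: "n > 0"
  shows "integral {0..c} f = (\<Sum>m<n. integral {c * real m / real n .. c * real (Suc m) / real n} f)"
proof -
  have "k \<le> n \<Longrightarrow> integral {0..c * real k / real n} f = (\<Sum>m<k. integral {c * real m / real n .. c * real (Suc m) / real n} f)" for k
  proof (induction k)
    case 0 thus ?case by simp
  next
    case (Suc k)
    have le1: "0 \<le> c * real k / real n" using c n by simp
    have le2: "c * real k / real n \<le> c * real (Suc k) / real n" using c n by (simp add: divide_right_mono mult_left_mono)
    have "c * real (Suc k) / real n \<le> c * real n / real n"
      by (intro divide_right_mono mult_left_mono) (use Suc.prems c in auto)
    hence le3: "c * real (Suc k) / real n \<le> c" using n by simp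
    have int: "f integrable_on {0..c * real (Suc k) / real n}"
      by (rule integrable_continuous_interval, rule continuous_on_subset[OF cf]) (use le3 in auto)
    have "integral {0..c * real (Suc k) / real n} f = integral {0..c * real k / real n} f + integral {c * real k / real n..c * real (Suc k) / real n} f"
      using Henstock_Kurzweil_Integration.integral_combine[OF le1 le2 int] by simp
    thus ?case using Suc by simp
  qed
  from this[of n] show ?thesis using n by simp
qed

lemma riemann_unif:
  fixes H :: "'a::metric_space \<Rightarrow> complex \<Rightarrow> complex"
  assumes K: "compact K" and cont: "continuous_on (K \<times> sphere 0 1) (\<lambda>p. H (fst p) (snd p))"
  shows "\<forall>\<epsilon>>0. \<exists>N. \<forall>n\<ge>N. \<forall>x\<in>K. norm ((\<Sum>m<n. H x (om n m)) / of_nat n - integral {0..2*pi} (\<lambda>t. H x (cis t)) / (2*pi)) < \<epsilon>"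
proof (intro allI impI)
  fix \<epsilon> :: real assume \<epsilon>: "\<epsilon> > 0"
  define \<psi> where "\<psi> p = H (fst p) (cis (snd p))" for p :: "'a \<times> real"
  have c1: "continuous_on (K \<times> {0..2*pi}) (\<lambda>p. (fst p, cis (snd p)))" by (intro continuous_intros)
  have img: "(\<lambda>p. (fst p, cis (snd p))) ` (K \<times> {0..2*pi}) \<subseteq> K \<times> sphere 0 1" by auto
  have c\<psi>: "continuous_on (K \<times> {0..2*pi}) \<psi>"
    using continuous_on_compose2[OF cont c1 img] unfolding \<psi>_def by simp
  have uc: "uniformly_continuous_on (K \<times> {0..2*pi}) \<psi>"
    by (rule compact_uniformly_continuous[OF c\<psi>]) (intro compact_Times K compact_Icc)
  have "\<epsilon>/2 > 0" using \<epsilon> by simp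
  then obtain d where d: "d > 0" and dd: "\<And>p p'. p \<in> K \<times> {0..2*pi} \<Longrightarrow> p' \<in> K \<times> {0..2*pi} \<Longrightarrow> dist p' p < d \<Longrightarrow> dist (\<psi> p') (\<psi> p) < \<epsilon>/2"
    using uc unfolding uniformly_continuous_on_def by metis
  obtain N :: nat where N: "2*pi/d < real N" using reals_Archimedean2 by blast
  have Npos: "real N > 0" using N d by (smt (verit) divide_pos_pos pi_gt_zero)
  show "\<exists>N. \<forall>n\<ge>N. \<forall>x\<in>K. norm ((\<Sum>m<n. H x (om n m)) / of_nat n - integral {0..2*pi} (\<lambda>t. H x (cis t)) / (2*pi)) < \<epsilon>"
  proof (intro exI allI impI ballI)
    fix n x assume nN: "N \<le> n" and x: "x \<in> K"
    have npos: "n > 0" using Npos nN by simp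
    have rn: "real n \<ge> real N" using nN by simp
    have step: "2*pi/real n < d"
    proof -
      have "2*pi/real n \<le> 2*pi/real N" using rn Npos by (simp add: frac_le)
      also have "\<dots> < d" using N d Npos by (simp add: field_simps)
      finally show ?thesis .
    qed
    define t where "t m = 2*pi*real m/real n" for m
    define \<phi> where "\<phi> s = H x (cis s)" for s
    have c\<phi>: "continuous_on {0..2*pi} \<phi>"
    proof -
      have "continuous_on {0..2*pi} (\<lambda>s. (x, s))" by (intro continuous_intros)
      moreover have "(\<lambda>s. (x, s)) ` {0..2*pi} \<subseteq> K \<times> {0..2*pi}" using x by auto
      ultimately show ?thesis using continuous_on_compose2[OF c\<psi>] unfolding \<phi>_def \<psi>_def by fastforce
    qed
    have split: "integral {0..2*pi} \<phi> = (\<Sum>m<n. integral {t m..t (Suc m)} \<phi>)"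
      unfolding t_def using integral_split[OF c\<phi> _ npos] by simp
    have tlen: "t (Suc m) - t m = 2*pi/real n" for m unfolding t_def by (simp add: add_divide_distrib ring_distribs)
    have tle: "t m \<le> t (Suc m)" for m using tlen[of m] npos by (smt (verit) divide_pos_pos of_nat_0_less_iff pi_gt_zero)
    have bound: "norm (integral {t m..t (Suc m)} \<phi> - of_real (2*pi/real n) * \<phi> (t m)) \<le> \<epsilon>/2 * (2*pi/real n)"
      if m: "m < n" for m
    proof -
      have t0: "0 \<le> t m" unfolding t_def by simp
      have "t (Suc m) \<le> 2*pi*real n/real n" unfolding t_def
        by (intro divide_right_mono mult_left_mono) (use m in auto)
      hence t1: "t (Suc m) \<le> 2*pi" using npos by simp
      have sub: "{t m..t (Suc m)} \<subseteq> {0..2*pi}" using t0 t1 by auto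
      have ci: "continuous_on {t m..t (Suc m)} \<phi>" using continuous_on_subset[OF c\<phi> sub] .
      have "integral {t m..t (Suc m)} (\<lambda>s. \<phi> s - \<phi> (t m)) = integral {t m..t (Suc m)} \<phi> - integral {t m..t (Suc m)} (\<lambda>s. \<phi> (t m))"
        by (rule integral_diff) (auto intro: integrable_continuous_interval ci)
      also have "integral {t m..t (Suc m)} (\<lambda>s. \<phi> (t m)) = of_real (2*pi/real n) * \<phi> (t m)"
        using tle[of m] tlen[of m] by (simp add: scaleR_conv_of_real)
      finally have eq: "integral {t m..t (Suc m)} \<phi> - of_real (2*pi/real n) * \<phi> (t m) = integral {t m..t (Suc m)} (\<lambda>s. \<phi> s - \<phi> (t m))" by simp
      have "norm (integral {t m..t (Suc m)} (\<lambda>s. \<phi> s - \<phi> (t m))) \<le> \<epsilon>/2 * (t (Suc m) - t m)"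
      proof (rule integral_bound[OF tle])
        show "continuous_on {t m..t (Suc m)} (\<lambda>s. \<phi> s - \<phi> (t m))" by (intro continuous_intros ci)
        fix s assume s: "s \<in> {t m..t (Suc m)}"
        have "dist (x, s) (x, t m) < d"
        proof -
          have "dist (x, s) (x, t m) = dist s (t m)" by (simp add: dist_Pair_Pair)
          also have "\<dots> \<le> t (Suc m) - t m" using s by (simp add: dist_real_def)
          also have "\<dots> < d" using tlen step by simp
          finally show ?thesis .
        qed
        hence "dist (\<psi> (x, s)) (\<psi> (x, t m)) < \<epsilon>/2"
          by (intro dd) (use x s sub t0 t1 tle in auto)
        thus "norm (\<phi> s - \<phi> (t m)) \<le> \<epsilon>/2" unfolding \<psi>_def \<phi>_def by (simp add: dist_norm)
      qed
      thus ?thesis using eq tlen by simp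
    qed
    have omt: "om n m = cis (t m)" for m unfolding om_def t_def ..
    have "(\<Sum>m<n. H x (om n m)) / of_nat n - integral {0..2*pi} (\<lambda>t. H x (cis t)) / (2*pi)
       = - (\<Sum>m<n. integral {t m..t (Suc m)} \<phi> - of_real (2*pi/real n) * \<phi> (t m)) / (2*pi)"
    proof -
      have "integral {0..2*pi} (\<lambda>t. H x (cis t)) = integral {0..2*pi} \<phi>" unfolding \<phi>_def ..
      moreover have "(\<Sum>m<n. H x (om n m)) / of_nat n = (\<Sum>m<n. of_real (2*pi/real n) * \<phi> (t m)) / (2*pi)"
      proof -
        have "(\<Sum>m<n. of_real (2*pi/real n) * \<phi> (t m)) = of_real (2*pi/real n) * (\<Sum>m<n. \<phi> (t m))"
          by (simp add: sum_distrib_left)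
        moreover have "(\<Sum>m<n. H x (om n m)) = (\<Sum>m<n. \<phi> (t m))" by (simp add: omt \<phi>_def)
        moreover have "of_real (2*pi/real n) * S / (2*pi) = S / of_nat n" for S :: complex
          using npos by (simp add: field_simps)
        ultimately show ?thesis by simp
      qed
      ultimately show ?thesis using split by (simp add: sum_subtractf diff_divide_distrib)
    qed
    also have "norm \<dots> \<le> (\<Sum>m<n. norm (integral {t m..t (Suc m)} \<phi> - of_real (2*pi/real n) * \<phi> (t m))) / (2*pi)"
      by (simp add: norm_divide norm_minus_cancel sum_norm_le divide_right_mono)
    also have "\<dots> \<le> (\<Sum>m<n. \<epsilon>/2 * (2*pi/real n)) / (2*pi)"
      by (intro divide_right_mono sum_mono bound) auto
    also have "\<dots> = \<epsilon>/2" using npos by simp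
    also have "\<dots> < \<epsilon>" using \<epsilon> by simp
    finally show "norm ((\<Sum>m<n. H x (om n m)) / of_nat n - integral {0..2*pi} (\<lambda>t. H x (cis t)) / (2*pi)) < \<epsilon>" .
  qed
qed

lemma oint_eq:
  assumes "\<And>w. w \<in> sphere 0 1 \<Longrightarrow> g w * w = H w"
  shows "oint g = integral {0..2*pi} (\<lambda>t. H (cis t)) / (2*pi)"
  unfolding oint_def using assms by simp

lemma unif_conv_riemann:
  fixes H :: "complex \<Rightarrow> complex \<Rightarrow> complex \<Rightarrow> complex"
  assumes G: "compact \<Gamma>"
    and cont: "continuous_on ((\<Gamma> \<times> \<Gamma>) \<times> sphere 0 1) (\<lambda>p. H (fst (fst p)) (snd (fst p)) (snd p))"
    and eqF: "\<And>n z z'. n \<ge> Nz \<Longrightarrow> z \<in> \<Gamma> \<Longrightarrow> z' \<in> \<Gamma> \<Longrightarrow> F n z z' = (\<Sum>m<n. H z z' (om n m)) / of_nat n"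
    and eqL: "\<And>z z'. z \<in> \<Gamma> \<Longrightarrow> z' \<in> \<Gamma> \<Longrightarrow> L z z' = integral {0..2*pi} (\<lambda>t. H z z' (cis t)) / (2*pi)"
  shows "unif_conv \<Gamma> F L"
  unfolding unif_conv_def
proof (intro allI impI)
  fix \<epsilon> :: real assume e: "\<epsilon> > 0"
  have K: "compact (\<Gamma> \<times> \<Gamma>)" using G by (intro compact_Times)
  have R: "\<forall>\<epsilon>>0. \<exists>N. \<forall>n\<ge>N. \<forall>x\<in>\<Gamma> \<times> \<Gamma>. norm ((\<Sum>m<n. H (fst x) (snd x) (om n m)) / of_nat n - integral {0..2*pi} (\<lambda>t. H (fst x) (snd x) (cis t)) / (2*pi)) < \<epsilon>"
    by (rule riemann_unif[OF K, of "\<lambda>p w. H (fst p) (snd p) w"]) (use cont in simp)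
  obtain N where
    N: "\<And>n x. n \<ge> N \<Longrightarrow> x \<in> \<Gamma> \<times> \<Gamma> \<Longrightarrow> norm ((\<Sum>m<n. H (fst x) (snd x) (om n m)) / of_nat n - integral {0..2*pi} (\<lambda>t. H (fst x) (snd x) (cis t)) / (2*pi)) < \<epsilon>"
    using R e by blast
  show "\<exists>N. \<forall>n\<ge>N. \<forall>z\<in>\<Gamma>. \<forall>z'\<in>\<Gamma>. norm (F n z z' - L z z') < \<epsilon>"
  proof (intro exI[of _ "max N Nz"] allI impI ballI)
    fix n z z' assume n: "max N Nz \<le> n" and z: "z \<in> \<Gamma>" and z': "z' \<in> \<Gamma>"
    show "norm (F n z z' - L z z') < \<epsilon>"
      using N[of n "(z, z')"] n z z' eqF[of n z z'] eqL[OF z z'] by simp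
  qed
qed

lemma unif_conv_cmult:
  assumes "unif_conv \<Gamma> f g"
  shows "unif_conv \<Gamma> (\<lambda>n z z'. c * f n z z') (\<lambda>z z'. c * g z z')"
proof (cases "c = 0")
  case True thus ?thesis unfolding unif_conv_def by simp
next
  case False
  show ?thesis unfolding unif_conv_def
  proof (intro allI impI)
    fix e :: real assume e: "e > 0"
    hence "e / norm c > 0" using False by simp
    then obtain N where N: "\<forall>n\<ge>N. \<forall>z\<in>\<Gamma>. \<forall>z'\<in>\<Gamma>. norm (f n z z' - g z z') < e / norm c"
      using assms unfolding unif_conv_def by blast
    show "\<exists>N. \<forall>n\<ge>N. \<forall>z\<in>\<Gamma>. \<forall>z'\<in>\<Gamma>. norm (c * f n z z' - c * g z z') < e"
    proof (intro exI[of _ N] allI impI ballI)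
      fix n z z' assume "N \<le> n" "z \<in> \<Gamma>" "z' \<in> \<Gamma>"
      hence "norm (f n z z' - g z z') < e / norm c" using N by blast
      hence "norm c * norm (f n z z' - g z z') < e" using False by (simp add: field_simps)
      thus "norm (c * f n z z' - c * g z z') < e" by (simp add: norm_mult right_diff_distrib[symmetric])
    qed
  qed
qed

lemma unif_conv_add:
  assumes "unif_conv \<Gamma> f g" "unif_conv \<Gamma> f' g'"
  shows "unif_conv \<Gamma> (\<lambda>n z z'. f n z z' + f' n z z') (\<lambda>z z'. g z z' + g' z z')"
  unfolding unif_conv_def
proof (intro allI impI)
  fix e :: real assume e: "e > 0"
  hence e2: "e/2 > 0" by simp
  obtain N1 where N1: "\<forall>n\<ge>N1. \<forall>z\<in>\<Gamma>. \<forall>z'\<in>\<Gamma>. norm (f n z z' - g z z') < e/2"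
    using assms(1) e2 unfolding unif_conv_def by blast
  obtain N2 where N2: "\<forall>n\<ge>N2. \<forall>z\<in>\<Gamma>. \<forall>z'\<in>\<Gamma>. norm (f' n z z' - g' z z') < e/2"
    using assms(2) e2 unfolding unif_conv_def by blast
  show "\<exists>N. \<forall>n\<ge>N. \<forall>z\<in>\<Gamma>. \<forall>z'\<in>\<Gamma>. norm (f n z z' + f' n z z' - (g z z' + g' z z')) < e"
  proof (intro exI[of _ "max N1 N2"] allI impI ballI)
    fix n z z' assume "max N1 N2 \<le> n" "z \<in> \<Gamma>" "z' \<in> \<Gamma>"
    hence a: "norm (f n z z' - g z z') < e/2" and b: "norm (f' n z z' - g' z z') < e/2" using N1 N2 by auto
    have "norm (f n z z' + f' n z z' - (g z z' + g' z z')) \<le> norm (f n z z' - g z z') + norm (f' n z z' - g' z z')"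
      by (metis add_diff_add norm_triangle_ineq)
    thus "norm (f n z z' + f' n z z' - (g z z' + g' z z')) < e" using a b by simp
  qed
qed

lemma unif_conv_sum:
  assumes "finite I" "\<And>i. i \<in> I \<Longrightarrow> unif_conv \<Gamma> (f i) (g i)"
  shows "unif_conv \<Gamma> (\<lambda>n z z'. \<Sum>i\<in>I. f i n z z') (\<lambda>z z'. \<Sum>i\<in>I. g i z z')"
  using assms
proof (induction I rule: finite_induct)
  case empty thus ?case unfolding unif_conv_def by simp
next
  case (insert i I)
  have "unif_conv \<Gamma> (\<lambda>n z z'. f i n z z' + (\<Sum>i\<in>I. f i n z z')) (\<lambda>z z'. g i z z' + (\<Sum>i\<in>I. g i z z'))"
    by (rule unif_conv_add) (use insert in auto)
  thus ?case using insert by simp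
qed

lemma triple_entry:
  fixes M1 X M2 :: "complex mat"
  assumes "M1 \<in> carrier_mat k k" "X \<in> carrier_mat k k" "M2 \<in> carrier_mat k k" "p < k" "q < k"
  shows "(M1 * X * M2) $$ (p, q) = (\<Sum>v<k. \<Sum>u<k. (M1 $$ (p, u) * M2 $$ (v, q)) * X $$ (u, v))"
proof -
  have "(M1 * X * M2) $$ (p, q) = (\<Sum>v<k. (M1 * X) $$ (p, v) * M2 $$ (v, q))"
    using assms by (subst mult_entry) auto
  also have "\<dots> = (\<Sum>v<k. (\<Sum>u<k. M1 $$ (p, u) * X $$ (u, v)) * M2 $$ (v, q))"
    using assms by (intro sum.cong refl) (subst mult_entry, auto)
  also have "\<dots> = (\<Sum>v<k. \<Sum>u<k. (M1 $$ (p, u) * M2 $$ (v, q)) * X $$ (u, v))"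
    by (simp add: sum_distrib_left sum_distrib_right mult_ac)
  finally show ?thesis .
qed

lemma unif_conv_mat_sandwich:
  fixes M1 M2 :: "complex mat"
  assumes conv: "unif_conv_mat k \<Gamma> X L"
    and M: "M1 \<in> carrier_mat k k" "M2 \<in> carrier_mat k k"
    and XC: "\<And>n z z'. X n z z' \<in> carrier_mat k k" and LC: "\<And>z z'. L z z' \<in> carrier_mat k k"
  shows "unif_conv_mat k \<Gamma> (\<lambda>n z z'. M1 * X n z z' * M2) (\<lambda>z z'. M1 * L z z' * M2)"
  unfolding unif_conv_mat_def
proof (intro allI impI)
  fix p q assume pq: "p < k" "q < k"
  have "unif_conv \<Gamma> (\<lambda>n z z'. \<Sum>v<k. \<Sum>u<k. (M1 $$ (p, u) * M2 $$ (v, q)) * X n z z' $$ (u, v))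
        (\<lambda>z z'. \<Sum>v<k. \<Sum>u<k. (M1 $$ (p, u) * M2 $$ (v, q)) * L z z' $$ (u, v))"
    using conv unfolding unif_conv_mat_def
    by (intro unif_conv_sum unif_conv_cmult) auto
  thus "unif_conv \<Gamma> (\<lambda>n z z'. (M1 * X n z z' * M2) $$ (p, q)) (\<lambda>z z'. (M1 * L z z' * M2) $$ (p, q))"
    using triple_entry[OF M(1) XC M(2) pq] triple_entry[OF M(1) LC M(2) pq] by simp
qed

lemma unif_conv_mat_eventually:
  assumes "unif_conv_mat k \<Gamma> X L"
    and "\<And>n z z'. n \<ge> Nz \<Longrightarrow> z \<in> \<Gamma> \<Longrightarrow> z' \<in> \<Gamma> \<Longrightarrow> F n z z' = X n z z'"
    and "\<And>z z'. z \<in> \<Gamma> \<Longrightarrow> z' \<in> \<Gamma> \<Longrightarrow> G z z' = L z z'"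
  shows "unif_conv_mat k \<Gamma> F G"
  unfolding unif_conv_mat_def unif_conv_def
proof (intro allI impI)
  fix p q e assume pq: "p < k" "q < k" and e: "(e::real) > 0"
  obtain N where N: "\<forall>n\<ge>N. \<forall>z\<in>\<Gamma>. \<forall>z'\<in>\<Gamma>. norm (X n z z' $$ (p,q) - L z z' $$ (p,q)) < e"
    using assms(1) pq e unfolding unif_conv_mat_def unif_conv_def by blast
  show "\<exists>N. \<forall>n\<ge>N. \<forall>z\<in>\<Gamma>. \<forall>z'\<in>\<Gamma>. norm (F n z z' $$ (p,q) - G z z' $$ (p,q)) < e"
    by (rule exI[of _ "max N Nz"]) (use N assms(2,3) in auto)
qed

lemma unif_conv_mat_master:
  fixes H :: "nat \<Rightarrow> nat \<Rightarrow> complex \<Rightarrow> complex \<Rightarrow> complex \<Rightarrow> complex"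
    and M1 M2 :: "complex mat"
  assumes G: "compact \<Gamma>"
    and M: "M1 \<in> carrier_mat k k" "M2 \<in> carrier_mat k k"
    and cont: "\<And>u v. u < k \<Longrightarrow> v < k \<Longrightarrow> continuous_on ((\<Gamma> \<times> \<Gamma>) \<times> sphere 0 1) (\<lambda>p. H u v (fst (fst p)) (snd (fst p)) (snd p))"
    and XC: "\<And>n z z'. X n z z' \<in> carrier_mat k k"
    and Xe: "\<And>n z z' u v. n \<ge> Nz \<Longrightarrow> z \<in> \<Gamma> \<Longrightarrow> z' \<in> \<Gamma> \<Longrightarrow> u < k \<Longrightarrow> v < k \<Longrightarrow>
       X n z z' $$ (u, v) = (\<Sum>m<n. H u v z z' (om n m)) / of_nat n"
    and Ge: "\<And>z z' w u v. z \<in> \<Gamma> \<Longrightarrow> z' \<in> \<Gamma> \<Longrightarrow> w \<in> sphere 0 1 \<Longrightarrow> u < k \<Longrightarrow> v < k \<Longrightarrow>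
       Gm z z' w $$ (u, v) * w = H u v z z' w"
    and Fe: "\<And>n z z'. n \<ge> Nz \<Longrightarrow> z \<in> \<Gamma> \<Longrightarrow> z' \<in> \<Gamma> \<Longrightarrow> F n z z' = M1 * X n z z' * M2"
    and Le: "\<And>z z'. L z z' = M1 * moint k (Gm z z') * M2"
  shows "unif_conv_mat k \<Gamma> F L"
proof -
  have c1: "unif_conv_mat k \<Gamma> X (\<lambda>z z'. moint k (Gm z z'))"
    unfolding unif_conv_mat_def
  proof (intro allI impI)
    fix u v assume uv: "u < k" "v < k"
    show "unif_conv \<Gamma> (\<lambda>n z z'. X n z z' $$ (u, v)) (\<lambda>z z'. moint k (Gm z z') $$ (u, v))"
    proof (rule unif_conv_riemann[OF G cont[OF uv]])
      show "X n z z' $$ (u, v) = (\<Sum>m<n. H u v z z' (om n m)) / of_nat n" if "n \<ge> Nz" "z \<in> \<Gamma>" "z' \<in> \<Gamma>" for n z z'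
        using Xe that uv by blast
      show "moint k (Gm z z') $$ (u, v) = integral {0..2*pi} (\<lambda>t. H u v z z' (cis t)) / (2*pi)" if "z \<in> \<Gamma>" "z' \<in> \<Gamma>" for z z'
        unfolding moint_def using uv that by (simp add: oint_eq Ge)
    qed
  qed
  have c2: "unif_conv_mat k \<Gamma> (\<lambda>n z z'. M1 * X n z z' * M2) (\<lambda>z z'. M1 * moint k (Gm z z') * M2)"
    by (rule unif_conv_mat_sandwich[OF c1 M XC]) (simp add: moint_def)
  show ?thesis by (rule unif_conv_mat_eventually[OF c2]) (use Fe Le in auto)
qed

definition selm :: "nat \<Rightarrow> nat \<Rightarrow> (nat \<Rightarrow> nat) \<Rightarrow> complex mat" where
  "selm k n \<sigma> = mat k n (\<lambda>(u,l). if l = \<sigma> u then 1 else 0)"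

lemma selm_dims[simp]: "dim_row (selm k n \<sigma>) = k" "dim_col (selm k n \<sigma>) = n" "selm k n \<sigma> \<in> carrier_mat k n"
  unfolding selm_def by auto

lemma selm_index[simp]: "u < k \<Longrightarrow> l < n \<Longrightarrow> selm k n \<sigma> $$ (u, l) = (if l = \<sigma> u then 1 else 0)"
  unfolding selm_def by simp

lemma selm_mult_entry:
  assumes "u < k" "\<sigma> u < n" "j < dim_col A" "dim_row A = n"
  shows "(selm k n \<sigma> * A) $$ (u, j) = A $$ (\<sigma> u, j)"
proof -
  have "(selm k n \<sigma> * A) $$ (u, j) = (\<Sum>l<n. (if l = \<sigma> u then 1 else 0) * A $$ (l, j))"
    using assms by (subst mult_entry) auto
  also have "\<dots> = (\<Sum>l<n. if l = \<sigma> u then A $$ (l, j) else 0)" by (intro sum.cong) auto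
  also have "\<dots> = A $$ (\<sigma> u, j)" using assms by (simp add: sum.delta)
  finally show ?thesis .
qed

lemma mult_selmT_entry:
  assumes "v < k" "\<sigma> v < n" "i < dim_row A" "dim_col A = n"
  shows "(A * transpose_mat (selm k n \<sigma>)) $$ (i, v) = A $$ (i, \<sigma> v)"
proof -
  have "(A * transpose_mat (selm k n \<sigma>)) $$ (i, v) = (\<Sum>l<n. A $$ (i, l) * (if l = \<sigma> v then 1 else 0))"
    using assms by (subst mult_entry) auto
  also have "\<dots> = (\<Sum>l<n. if l = \<sigma> v then A $$ (i, l) else 0)" by (intro sum.cong) auto
  also have "\<dots> = A $$ (i, \<sigma> v)" using assms by (simp add: sum.delta)
  finally show ?thesis .
qed

lemma selm_sandwich_entry:
  assumes M: "M \<in> carrier_mat n n" and uv: "u < k" "v < k" and s: "\<sigma> u < n" "\<tau> v < n"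
  shows "(selm k n \<sigma> * M * transpose_mat (selm k n \<tau>)) $$ (u, v) = M $$ (\<sigma> u, \<tau> v)"
proof -
  have "(selm k n \<sigma> * M * transpose_mat (selm k n \<tau>)) $$ (u, v) = (selm k n \<sigma> * M) $$ (u, \<tau> v)"
    using M uv s by (intro mult_selmT_entry) auto
  also have "\<dots> = M $$ (\<sigma> u, \<tau> v)" using M uv s by (intro selm_mult_entry) auto
  finally show ?thesis .
qed

lemma adj_carrier[simp]: "adj A \<in> carrier_mat (dim_col A) (dim_row A)" "dim_row (adj A) = dim_col A" "dim_col (adj A) = dim_row A"
  unfolding adj_def by auto
lemma cmat_carrier[simp]: "cmat A \<in> carrier_mat (dim_row A) (dim_col A)" "dim_row (cmat A) = dim_row A" "dim_col (cmat A) = dim_col A"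
  unfolding cmat_def by auto

lemma cmat_mult:
  assumes "A \<in> carrier_mat n m" "B \<in> carrier_mat m p"
  shows "cmat (A * B) = cmat A * cmat B"
proof (rule eq_matI)
  fix i j assume "i < dim_row (cmat A * cmat B)" "j < dim_col (cmat A * cmat B)"
  hence ij: "i < n" "j < p" using assms by auto
  have "cmat (A * B) $$ (i, j) = cnj ((A * B) $$ (i, j))" using assms ij by (simp add: cmat_def)
  also have "(A * B) $$ (i, j) = (\<Sum>l<m. A $$ (i, l) * B $$ (l, j))" using assms ij by (subst mult_entry) auto
  also have "(cmat A * cmat B) $$ (i, j) = (\<Sum>l<m. cmat A $$ (i, l) * cmat B $$ (l, j))" using assms ij by (subst mult_entry) auto
  ultimately show "cmat (A * B) $$ (i, j) = (cmat A * cmat B) $$ (i, j)"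
    using assms ij by (simp add: cmat_def)
qed (use assms in \<open>auto simp: cmat_def\<close>)

lemma adj_is: "adj A = transpose_mat (cmat A)" unfolding adj_def cmat_def ..

lemma adj_mult:
  assumes "A \<in> carrier_mat n m" "B \<in> carrier_mat m p"
  shows "adj (A * B) = adj B * adj A"
proof -
  have "cmat A \<in> carrier_mat n m" "cmat B \<in> carrier_mat m p" using assms by (auto simp: cmat_def)
  thus ?thesis unfolding adj_is using assms by (simp add: cmat_mult transpose_mult)
qed

lemma adj_transpose: "adj (transpose_mat A) = cmat A"
  by (rule eq_matI) (auto simp: adj_def cmat_def)

lemma cmat_selm[simp]: "cmat (selm k n \<sigma>) = selm k n \<sigma>"
  by (rule eq_matI) (auto simp: cmat_def)

lemma adj_selm: "adj (selm k n \<sigma>) = transpose_mat (selm k n \<sigma>)"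
  unfolding adj_is by simp

lemma sum_sel1:
  fixes k u0 j :: nat and \<sigma> :: "nat \<Rightarrow> nat"
  assumes "u0 < k" "\<And>u. u < k \<Longrightarrow> (\<sigma> u = j) = (u = u0)"
  shows "(\<Sum>u<k. c u * (if j = \<sigma> u then 1 else 0)) = (c u0 :: complex)"
proof -
  have "(\<Sum>u<k. c u * (if j = \<sigma> u then 1 else 0)) = (\<Sum>u\<in>{..<k}. if u = u0 then c u else 0)"
    using assms(2) by (intro sum.cong refl) (metis lessThan_iff mult_cancel_left1 mult_zero_right)
  also have "\<dots> = c u0" using assms(1) by (subst sum.delta) auto
  finally show ?thesis .
qed

lemma sum_sel0:
  fixes k j :: nat and \<sigma> :: "nat \<Rightarrow> nat"
  assumes "\<And>u. u < k \<Longrightarrow> \<sigma> u \<noteq> j"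
  shows "(\<Sum>u<k. c u * (if j = \<sigma> u then 1 else 0)) = (0 :: complex)"
  using assms by (intro sum.neutral) auto

definition sigQ :: "nat \<Rightarrow> nat \<Rightarrow> nat \<Rightarrow> nat \<Rightarrow> nat" where
  "sigQ r s n u = (if u < s then u else n - r + (u - s))"

definition sigP :: "nat \<Rightarrow> nat \<Rightarrow> nat \<Rightarrow> nat \<Rightarrow> nat" where
  "sigP r s n u = (if u < s then n - s + u else u - s)"

lemma calD_carrier[simp]: "calD r s a \<in> carrier_mat (r+s) (r+s)" unfolding calD_def by auto
lemma calE_carrier[simp]: "calE r s a \<in> carrier_mat (r+s) (r+s)" unfolding calE_def by auto

lemma Qn_decomp:
  assumes n: "n > r + s"
  shows "Qn r s a n = calD r s a * selm (r+s) n (sigQ r s n)"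
proof (rule eq_matI)
  fix i j assume "i < dim_row (calD r s a * selm (r+s) n (sigQ r s n))" "j < dim_col (calD r s a * selm (r+s) n (sigQ r s n))"
  hence ij: "i < r + s" "j < n" by (auto simp: calD_def)
  have e: "(calD r s a * selm (r+s) n (sigQ r s n)) $$ (i, j) = (\<Sum>u<r+s. calD r s a $$ (i, u) * (if j = sigQ r s n u then 1 else 0))"
    using ij by (subst mult_entry) (auto simp: calD_def)
  show "Qn r s a n $$ (i, j) = (calD r s a * selm (r+s) n (sigQ r s n)) $$ (i, j)"
  proof (cases "j < s")
    case True
    have "(\<Sum>u<r+s. calD r s a $$ (i, u) * (if j = sigQ r s n u then 1 else 0)) = calD r s a $$ (i, j)"
      by (rule sum_sel1) (use True n in \<open>auto simp: sigQ_def\<close>)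
    thus ?thesis unfolding e using True ij n by (auto simp: Qn_def calD_def)
  next
    case False
    show ?thesis
    proof (cases "j \<ge> n - r")
      case True
      have "(\<Sum>u<r+s. calD r s a $$ (i, u) * (if j = sigQ r s n u then 1 else 0)) = calD r s a $$ (i, s + (j - (n - r)))"
        by (rule sum_sel1) (use True False n ij in \<open>auto simp: sigQ_def\<close>)
      thus ?thesis unfolding e using True False ij n by (auto simp: Qn_def calD_def)
    next
      case False2: False
      have "(\<Sum>u<r+s. calD r s a $$ (i, u) * (if j = sigQ r s n u then 1 else 0)) = 0"
        by (rule sum_sel0) (use False False2 n in \<open>auto simp: sigQ_def\<close>)
      thus ?thesis unfolding e using False False2 ij n by (auto simp: Qn_def)
    qed
  qed
qed (auto simp: Qn_def calD_def)

lemma Pn_decomp: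
  assumes n: "n > r + s"
  shows "Pn r s a n = transpose_mat (selm (r+s) n (sigP r s n)) * calE r s a"
proof (rule eq_matI)
  fix i j assume "i < dim_row (transpose_mat (selm (r+s) n (sigP r s n)) * calE r s a)" "j < dim_col (transpose_mat (selm (r+s) n (sigP r s n)) * calE r s a)"
  hence ij: "i < n" "j < r + s" by (auto simp: calE_def)
  have e: "(transpose_mat (selm (r+s) n (sigP r s n)) * calE r s a) $$ (i, j) = (\<Sum>u<r+s. calE r s a $$ (u, j) * (if i = sigP r s n u then 1 else 0))"
    using ij by (subst mult_entry) (auto simp: calE_def mult.commute intro!: sum.cong)
  show "Pn r s a n $$ (i, j) = (transpose_mat (selm (r+s) n (sigP r s n)) * calE r s a) $$ (i, j)"
  proof (cases "i < r")
    case True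
    have "(\<Sum>u<r+s. calE r s a $$ (u, j) * (if i = sigP r s n u then 1 else 0)) = calE r s a $$ (s + i, j)"
      by (rule sum_sel1) (use True n in \<open>auto simp: sigP_def\<close>)
    thus ?thesis unfolding e using True ij n by (auto simp: Pn_def calE_def)
  next
    case False
    show ?thesis
    proof (cases "i \<ge> n - s")
      case True
      have "(\<Sum>u<r+s. calE r s a $$ (u, j) * (if i = sigP r s n u then 1 else 0)) = calE r s a $$ (i - (n - s), j)"
        by (rule sum_sel1) (use True False n ij in \<open>auto simp: sigP_def\<close>)
      thus ?thesis unfolding e using True False ij n by (auto simp: Pn_def calE_def)
    next
      case False2: False
      have "(\<Sum>u<r+s. calE r s a $$ (u, j) * (if i = sigP r s n u then 1 else 0)) = 0"
        by (rule sum_sel0) (use False False2 n in \<open>auto simp: sigP_def\<close>)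
      thus ?thesis unfolding e using False False2 ij n by (auto simp: Pn_def)
    qed
  qed
qed (auto simp: Pn_def calE_def)

lemma tr_comm:
  assumes "A \<in> carrier_mat n m" "B \<in> carrier_mat m n"
  shows "tr (A * B) = tr (B * A)"
proof -
  have e1: "(A * B) $$ (x, x) = (\<Sum>l<m. A $$ (x, l) * B $$ (l, x))" if "x < n" for x
    using mult_entry[of x A x B] assms that by simp
  have e2: "(B * A) $$ (x, x) = (\<Sum>i<n. B $$ (x, i) * A $$ (i, x))" if "x < m" for x
    using mult_entry[of x B x A] assms that by simp
  have "tr (A * B) = (\<Sum>i<n. \<Sum>l<m. A $$ (i, l) * B $$ (l, i))"
    unfolding tr_def using assms e1 by simp
  also have "\<dots> = (\<Sum>l<m. \<Sum>i<n. B $$ (l, i) * A $$ (i, l))"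
    by (subst sum.swap) (simp add: mult.commute)
  also have "tr (B * A) = (\<Sum>l<m. \<Sum>i<n. B $$ (l, i) * A $$ (i, l))"
    unfolding tr_def using assms e2 by simp
  hence "(\<Sum>l<m. \<Sum>i<n. B $$ (l, i) * A $$ (i, l)) = tr (B * A)" ..
  finally show ?thesis .
qed

lemma cont_symb:
  assumes "continuous_on S f" "\<And>p. p \<in> S \<Longrightarrow> f p \<noteq> 0"
  shows "continuous_on S (\<lambda>p. symb r s a (f p))"
  unfolding symb_def using assms by (intro continuous_intros) auto

lemma symb_nz:
  assumes "\<Gamma> \<inter> symb r s a ` sphere 0 1 = {}" "z \<in> \<Gamma>" "w \<in> sphere 0 1"
  shows "z - symb r s a w \<noteq> 0"
  using assms by auto

lemma resolv_Km':
  assumes n: "n > 0" and G: "\<Gamma> \<inter> symb r s a ` sphere 0 1 = {}" and z: "z \<in> \<Gamma>"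
  shows "resolv r s a n z = Km n (\<lambda>w. 1 / (z - symb r s a w))"
  by (rule resolv_Km[OF n]) (use symb_nz[OF G z om_sphere] in auto)

lemma sphere_nz: "w \<in> sphere (0::complex) 1 \<Longrightarrow> w \<noteq> 0" by auto

lemma conv_theta:
  assumes G: "compact \<Gamma>" and D: "\<Gamma> \<inter> symb r s a ` sphere 0 1 = {}"
  shows "unif_conv \<Gamma> (\<lambda>n. theta_n r s a n) (theta_lim r s a)"
proof (rule unif_conv_riemann[OF G, where Nz = "Suc 0" and H = "\<lambda>z z' w. 1 / ((z - symb r s a w) * cnj (z' - symb r s a w))"])
  let ?S = "(\<Gamma> \<times> \<Gamma>) \<times> sphere (0::complex) 1"
  have c0: "continuous_on ?S (\<lambda>p. symb r s a (snd p))"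
    by (rule cont_symb) (auto intro!: continuous_intros)
  show "continuous_on ?S (\<lambda>p. 1 / ((fst (fst p) - symb r s a (snd p)) * cnj (snd (fst p) - symb r s a (snd p))))"
    using symb_nz[OF D] by (intro continuous_intros c0) auto
next
  fix n z z' assume n: "Suc 0 \<le> n" and z: "z \<in> \<Gamma>" and z': "z' \<in> \<Gamma>"
  hence n0: "n > 0" by simp
  have "theta_n r s a n z z' = tr (Km n (\<lambda>w. 1 / (z - symb r s a w)) * Km n (\<lambda>w. cnj (1 / (z' - symb r s a w)))) / of_nat n"
    unfolding theta_n_def resolv_Km'[OF n0 D z] resolv_Km'[OF n0 D z'] adj_Km[OF n0] ..
  also have "\<dots> = (\<Sum>m<n. 1 / ((z - symb r s a (om n m)) * cnj (z' - symb r s a (om n m)))) / of_nat n"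
    unfolding Km_Km[OF n0] tr_Km[OF n0] by simp
  finally show "theta_n r s a n z z' = (\<Sum>m<n. 1 / ((z - symb r s a (om n m)) * cnj (z' - symb r s a (om n m)))) / of_nat n" .
next
  fix z z' assume z: "z \<in> \<Gamma>" and z': "z' \<in> \<Gamma>"
  show "theta_lim r s a z z' = integral {0..2*pi} (\<lambda>t. 1 / ((z - symb r s a (cis t)) * cnj (z' - symb r s a (cis t)))) / (2*pi)"
    unfolding theta_lim_def by (rule oint_eq) (auto simp: sphere_nz)
qed

lemma assoc_gen2:
  fixes D S K1 K2 E :: "complex mat"
  assumes D: "D \<in> carrier_mat k k" and S: "S \<in> carrier_mat k n" and K1: "K1 \<in> carrier_mat n n"
    and K2: "K2 \<in> carrier_mat n n" and E: "E \<in> carrier_mat k k"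
  shows "D * S * K1 * K2 * (transpose_mat S * E) = D * (S * (K1 * K2) * transpose_mat S) * E"
proof -
  have DS: "D * S \<in> carrier_mat k n" using D S by simp
  have K: "K1 * K2 \<in> carrier_mat n n" using K1 K2 by simp
  have ST: "transpose_mat S \<in> carrier_mat n k" using S by simp
  have STE: "transpose_mat S * E \<in> carrier_mat n k" using ST E by simp
  have SK: "S * (K1 * K2) \<in> carrier_mat k n" using S K by simp
  have SKS: "S * (K1 * K2) * transpose_mat S \<in> carrier_mat k k" using SK ST by simp
  have "D * S * K1 * K2 * (transpose_mat S * E) = (D * S) * (K1 * K2) * (transpose_mat S * E)"
    using assoc_mult_mat[OF DS K1 K2] by simp
  also have "\<dots> = D * (S * (K1 * K2)) * (transpose_mat S * E)"
    using assoc_mult_mat[OF D S K] by simp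
  also have "\<dots> = D * (S * (K1 * K2) * (transpose_mat S * E))"
    using assoc_mult_mat[OF D SK STE] by simp
  also have "S * (K1 * K2) * (transpose_mat S * E) = S * (K1 * K2) * transpose_mat S * E"
    using assoc_mult_mat[OF SK ST E] by simp
  also have "D * (S * (K1 * K2) * transpose_mat S * E) = D * (S * (K1 * K2) * transpose_mat S) * E"
    using assoc_mult_mat[OF D SKS E] by simp
  finally show ?thesis .
qed

lemma assoc_gen4:
  fixes D S K1 K2 K3 K4 E :: "complex mat"
  assumes D: "D \<in> carrier_mat k k" and S: "S \<in> carrier_mat k n" and K1: "K1 \<in> carrier_mat n n"
    and K2: "K2 \<in> carrier_mat n n" and K3: "K3 \<in> carrier_mat n n" and K4: "K4 \<in> carrier_mat n n"
    and E: "E \<in> carrier_mat k k"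
  shows "D * S * K1 * K2 * K3 * K4 * (transpose_mat S * E) = D * (S * (K1 * (K2 * K3) * K4) * transpose_mat S) * E"
proof -
  have DS: "D * S \<in> carrier_mat k n" using D S by simp
  have DSK1: "D * S * K1 \<in> carrier_mat k n" using DS K1 by simp
  have K23: "K2 * K3 \<in> carrier_mat n n" using K2 K3 by simp
  have K123: "K1 * (K2 * K3) \<in> carrier_mat n n" using K1 K23 by simp
  have "D * S * K1 * K2 * K3 = D * S * K1 * (K2 * K3)" using assoc_mult_mat[OF DSK1 K2 K3] by simp
  also have "\<dots> = D * S * (K1 * (K2 * K3))" using assoc_mult_mat[OF DS K1 K23] by simp
  finally have "D * S * K1 * K2 * K3 * K4 * (transpose_mat S * E) = D * S * (K1 * (K2 * K3)) * K4 * (transpose_mat S * E)"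
    by simp
  also have "\<dots> = D * (S * (K1 * (K2 * K3) * K4) * transpose_mat S) * E"
    by (rule assoc_gen2[OF D S K123 K4 E])
  finally show ?thesis .
qed

definition tauQ :: "nat \<Rightarrow> nat \<Rightarrow> nat \<Rightarrow> int" where
  "tauQ r s u = (if u < s then int u else int u - int (r + s))"

lemma rho_shift_diff:
  assumes n: "n > 0" and x: "int x = d + int n * c" and y: "int y = d' + int n * c'"
  shows "rho n f (int x - int y) = rho n f (d - d')"
proof -
  have "int x - int y = (d - d') + int n * (c - c')" using x y by (simp add: algebra_simps)
  thus ?thesis using rho_period[OF n] by simp
qed

lemma rho_shift_sum:
  assumes n: "n > 0" and x: "int x = d + int n * c" and y: "int y = d' + int n * c'"
  shows "rho n f (int x + int y) = rho n f (d + d')"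
proof -
  have "int x + int y = (d + d') + int n * (c + c')" using x y by (simp add: algebra_simps)
  thus ?thesis using rho_period[OF n] by simp
qed

lemma sigQ_int: assumes "n > r + s" "u < r + s"
  shows "int (sigQ r s n u) = tauQ r s u + int n * (if u < s then 0 else 1)" "sigQ r s n u < n"
  using assms by (auto simp: sigQ_def tauQ_def of_nat_diff)

lemma sigP_int: assumes "n > r + s" "u < r + s"
  shows "int (sigP r s n u) = (int u - int s) + int n * (if u < s then 1 else 0)" "sigP r s n u < n"
  using assms by (auto simp: sigP_def of_nat_diff)

lemma XQK_entry:
  assumes n: "n > r + s" and uv: "u < r + s" "v < r + s"
  shows "(selm (r+s) n (sigQ r s n) * Km n f * transpose_mat (selm (r+s) n (sigQ r s n))) $$ (u, v) = rho n f (tauQ r s u - tauQ r s v)"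
proof -
  have n0: "n > 0" using n by simp
  have "(selm (r+s) n (sigQ r s n) * Km n f * transpose_mat (selm (r+s) n (sigQ r s n))) $$ (u, v) = Km n f $$ (sigQ r s n u, sigQ r s n v)"
    by (rule selm_sandwich_entry) (use sigQ_int[OF n] uv in auto)
  also have "\<dots> = rho n f (int (sigQ r s n u) - int (sigQ r s n v))" using sigQ_int[OF n] uv by simp
  also have "\<dots> = rho n f (tauQ r s u - tauQ r s v)"
    by (rule rho_shift_diff[OF n0 sigQ_int(1)[OF n uv(1)] sigQ_int(1)[OF n uv(2)]])
  finally show ?thesis .
qed

lemma XQL_entry:
  assumes n: "n > r + s" and uv: "u < r + s" "v < r + s"
  shows "(selm (r+s) n (sigQ r s n) * Lm n f * transpose_mat (selm (r+s) n (sigQ r s n))) $$ (u, v) = rho n f (tauQ r s u + tauQ r s v)"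
proof -
  have n0: "n > 0" using n by simp
  have "(selm (r+s) n (sigQ r s n) * Lm n f * transpose_mat (selm (r+s) n (sigQ r s n))) $$ (u, v) = Lm n f $$ (sigQ r s n u, sigQ r s n v)"
    by (rule selm_sandwich_entry) (use sigQ_int[OF n] uv in auto)
  also have "\<dots> = rho n f (int (sigQ r s n u) + int (sigQ r s n v))" using sigQ_int[OF n] uv by simp
  also have "\<dots> = rho n f (tauQ r s u + tauQ r s v)"
    by (rule rho_shift_sum[OF n0 sigQ_int(1)[OF n uv(1)] sigQ_int(1)[OF n uv(2)]])
  finally show ?thesis .
qed

lemma XPK_entry:
  assumes n: "n > r + s" and uv: "u < r + s" "v < r + s"
  shows "(selm (r+s) n (sigP r s n) * Km n f * transpose_mat (selm (r+s) n (sigP r s n))) $$ (u, v) = rho n f (int u - int v)"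
proof -
  have n0: "n > 0" using n by simp
  have "(selm (r+s) n (sigP r s n) * Km n f * transpose_mat (selm (r+s) n (sigP r s n))) $$ (u, v) = Km n f $$ (sigP r s n u, sigP r s n v)"
    by (rule selm_sandwich_entry) (use sigP_int[OF n] uv in auto)
  also have "\<dots> = rho n f (int (sigP r s n u) - int (sigP r s n v))" using sigP_int[OF n] uv by simp
  also have "\<dots> = rho n f ((int u - int s) - (int v - int s))"
    by (rule rho_shift_diff[OF n0 sigP_int(1)[OF n uv(1)] sigP_int(1)[OF n uv(2)]])
  finally show ?thesis by simp
qed

lemma XPL_entry:
  assumes n: "n > r + s" and uv: "u < r + s" "v < r + s"
  shows "(selm (r+s) n (sigP r s n) * Lm n f * transpose_mat (selm (r+s) n (sigP r s n))) $$ (u, v) = rho n f (int u + int v - 2 * int s)"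
proof -
  have n0: "n > 0" using n by simp
  have "(selm (r+s) n (sigP r s n) * Lm n f * transpose_mat (selm (r+s) n (sigP r s n))) $$ (u, v) = Lm n f $$ (sigP r s n u, sigP r s n v)"
    by (rule selm_sandwich_entry) (use sigP_int[OF n] uv in auto)
  also have "\<dots> = rho n f (int (sigP r s n u) + int (sigP r s n v))" using sigP_int[OF n] uv by simp
  also have "\<dots> = rho n f ((int u - int s) + (int v - int s))"
    by (rule rho_shift_sum[OF n0 sigP_int(1)[OF n uv(1)] sigP_int(1)[OF n uv(2)]])
  finally show ?thesis by (simp add: algebra_simps)
qed

lemma dgm_carrier[simp]: "dgm r s c \<in> carrier_mat (r+s) (r+s)" unfolding dgm_def by auto

lemma dgm_triple_entry:
  assumes M: "M \<in> carrier_mat (r+s) (r+s)" and uv: "u < r + s" "v < r + s"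
  shows "(dgm r s c1 * M * dgm r s c2) $$ (u, v) = (if u < s then 1 else c1) * M $$ (u, v) * (if v < s then 1 else c2)"
proof -
  have "(dgm r s c1 * M * dgm r s c2) $$ (u, v) = (\<Sum>l<r+s. (dgm r s c1 * M) $$ (u, l) * dgm r s c2 $$ (l, v))"
    using M uv by (subst mult_entry) (auto simp: dgm_def)
  also have "\<dots> = (\<Sum>l<r+s. if l = v then (dgm r s c1 * M) $$ (u, l) * (if v < s then 1 else c2) else 0)"
    using uv by (intro sum.cong refl) (auto simp: dgm_def)
  also have "\<dots> = (dgm r s c1 * M) $$ (u, v) * (if v < s then 1 else c2)" using uv by (subst sum.delta) auto
  also have "(dgm r s c1 * M) $$ (u, v) = (\<Sum>l<r+s. dgm r s c1 $$ (u, l) * M $$ (l, v))"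
    using M uv by (subst mult_entry) (auto simp: dgm_def)
  also have "\<dots> = (\<Sum>l<r+s. if l = u then (if u < s then 1 else c1) * M $$ (l, v) else 0)"
    using uv by (intro sum.cong refl) (auto simp: dgm_def)
  also have "\<dots> = (if u < s then 1 else c1) * M $$ (u, v)" using uv by (subst sum.delta) auto
  finally show ?thesis .
qed

lemma pw_comb:
  assumes w: "(w::complex) \<noteq> 0"
  shows "(if u < s then 1 else w powi e1) * w powi e2 * (if v < s then 1 else w powi e3)
       = w powi ((if u < s then 0 else e1) + e2 + (if v < s then 0 else e3))"
  using w by (auto simp: power_int_add)

lemma calF_carrier[simp]: "calF k w \<in> carrier_mat k k" unfolding calF_def by auto
lemma calF1_carrier[simp]: "calF1 k w \<in> carrier_mat k k" unfolding calF1_def by auto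
lemma calF1'_carrier[simp]: "calF1' k s w \<in> carrier_mat k k" unfolding calF1'_def by auto

lemma dgm_calF_entry:
  assumes uv: "u < r + s" "v < r + s" and w: "w \<noteq> 0"
  shows "(dgm r s (w powi (- int (r+s))) * calF (r+s) w * dgm r s (w powi (int (r+s)))) $$ (u, v)
       = w powi (tauQ r s u - tauQ r s v)"
proof -
  have "(dgm r s (w powi (- int (r+s))) * calF (r+s) w * dgm r s (w powi (int (r+s)))) $$ (u, v)
      = w powi ((if u < s then 0 else - int (r+s)) + (int u - int v) + (if v < s then 0 else int (r+s)))"
    using uv by (simp add: dgm_triple_entry calF_def pw_comb[OF w] del: power_int_of_nat)
  also have "(if u < s then 0 else - int (r+s)) + (int u - int v) + (if v < s then 0 else int (r+s)) = tauQ r s u - tauQ r s v"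
    by (simp add: tauQ_def)
  finally show ?thesis .
qed

lemma cont_H1:
  assumes D: "\<Gamma> \<inter> symb r s a ` sphere 0 1 = {}"
  shows "continuous_on ((\<Gamma> \<times> \<Gamma>) \<times> sphere 0 1) (\<lambda>p. 1 / ((fst (fst p) - symb r s a (snd p)) * cnj (snd (fst p) - symb r s a (snd p))) * snd p powi e)"
proof -
  let ?S = "(\<Gamma> \<times> \<Gamma>) \<times> sphere (0::complex) 1"
  have c0: "continuous_on ?S (\<lambda>p. symb r s a (snd p))"
    by (rule cont_symb) (auto intro!: continuous_intros)
  show ?thesis
    using symb_nz[OF D] by (intro continuous_intros c0) auto
qed

lemma adj_calD_carrier[simp]: "adj (calD r s a) \<in> carrier_mat (r+s) (r+s)"
  unfolding adj_def calD_def by auto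
lemma adj_calE_carrier[simp]: "adj (calE r s a) \<in> carrier_mat (r+s) (r+s)"
  unfolding adj_def calE_def by auto

lemma cancel_w: "(w::complex) \<noteq> 0 \<Longrightarrow> 1 / (w * x * y) * p * w = 1 / (x * y) * p"
  by (cases "x * y = 0") (auto simp: field_simps)

lemma conv_A:
  assumes G: "compact \<Gamma>" and D: "\<Gamma> \<inter> symb r s a ` sphere 0 1 = {}"
  shows "unif_conv_mat (r+s) \<Gamma> (\<lambda>n. A_n r s a n) (A_lim r s a)"
proof (rule unif_conv_mat_master[OF G calD_carrier adj_carrier(1)[of "calD r s a", simplified calD_carrier[THEN carrier_matD(1)] calD_carrier[THEN carrier_matD(2)]],
   where Nz = "Suc (r+s)"
     and X = "\<lambda>n z z'. selm (r+s) n (sigQ r s n) * Km n (\<lambda>w. 1 / ((z - symb r s a w) * cnj (z' - symb r s a w))) * transpose_mat (selm (r+s) n (sigQ r s n))"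
     and H = "\<lambda>u v z z' w. 1 / ((z - symb r s a w) * cnj (z' - symb r s a w)) * w powi (tauQ r s u - tauQ r s v)"
     and Gm = "\<lambda>z z' \<omega>. (1 / (\<omega> * (z - symb r s a \<omega>) * cnj (z' - symb r s a \<omega>))) \<cdot>\<^sub>m
        (dgm r s (\<omega> powi (- int (r+s))) * calF (r+s) \<omega> * dgm r s (\<omega> powi (int (r+s))))"])
  fix u v assume "u < r + s" "v < r + s"
  show "continuous_on ((\<Gamma> \<times> \<Gamma>) \<times> sphere 0 1) (\<lambda>p. 1 / ((fst (fst p) - symb r s a (snd p)) * cnj (snd (fst p) - symb r s a (snd p))) * snd p powi (tauQ r s u - tauQ r s v))"
    by (rule cont_H1[OF D])
next
  fix n z z' show "selm (r+s) n (sigQ r s n) * Km n (\<lambda>w. 1 / ((z - symb r s a w) * cnj (z' - symb r s a w))) * transpose_mat (selm (r+s) n (sigQ r s n)) \<in> carrier_mat (r+s) (r+s)"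
    by (intro mult_carrier_mat[of _ _ n]) auto
next
  fix n z z' u v assume n: "Suc (r+s) \<le> n" and z: "z \<in> \<Gamma>" and z': "z' \<in> \<Gamma>" and uv: "u < r + s" "v < r + s"
  show "(selm (r+s) n (sigQ r s n) * Km n (\<lambda>w. 1 / ((z - symb r s a w) * cnj (z' - symb r s a w))) * transpose_mat (selm (r+s) n (sigQ r s n))) $$ (u, v)
     = (\<Sum>m<n. 1 / ((z - symb r s a (om n m)) * cnj (z' - symb r s a (om n m))) * om n m powi (tauQ r s u - tauQ r s v)) / of_nat n"
    using n uv by (subst XQK_entry) (auto simp: rho_def)
next
  fix z z' w :: complex and u v :: nat assume z: "z \<in> \<Gamma>" and z': "z' \<in> \<Gamma>" and w: "w \<in> sphere 0 1" and uv: "u < r + s" "v < r + s"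
  have w0: "w \<noteq> 0" using w by auto
  have e: "(dgm r s (w powi (- int (r+s))) * calF (r+s) w * dgm r s (w powi (int (r+s)))) $$ (u, v) = w powi (tauQ r s u - tauQ r s v)"
    by (rule dgm_calF_entry[OF uv w0])
  have d: "(dgm r s (w powi (- int (r+s))) * calF (r+s) w * dgm r s (w powi (int (r+s)))) \<in> carrier_mat (r+s) (r+s)"
    by (intro mult_carrier_mat[of _ _ "r+s"]) auto
  show "((1 / (w * (z - symb r s a w) * cnj (z' - symb r s a w))) \<cdot>\<^sub>m
        (dgm r s (w powi (- int (r+s))) * calF (r+s) w * dgm r s (w powi (int (r+s))))) $$ (u, v) * w
      = 1 / ((z - symb r s a w) * cnj (z' - symb r s a w)) * w powi (tauQ r s u - tauQ r s v)"
    (is "(?c \<cdot>\<^sub>m ?M) $$ (u, v) * w = ?rhs")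
  proof -
    have i: "(?c \<cdot>\<^sub>m ?M) $$ (u, v) = ?c * ?M $$ (u, v)" by (rule index_smult_mat(1)) (use d uv in auto)
    have x1: "z - symb r s a w \<noteq> 0" by (rule symb_nz[OF D z w])
    have x2: "cnj (z' - symb r s a w) \<noteq> 0" using symb_nz[OF D z' w] by simp
    show ?thesis unfolding i e using cancel_w[OF w0] by simp
  qed
next
  fix n z z' assume n: "Suc (r+s) \<le> n" and z: "z \<in> \<Gamma>" and z': "z' \<in> \<Gamma>"
  have n0: "n > 0" and n1: "n > r + s" using n by auto
  let ?S = "selm (r+s) n (sigQ r s n)"
  have "A_n r s a n z z' = calD r s a * ?S * Km n (\<lambda>w. 1 / (z - symb r s a w)) * Km n (\<lambda>w. cnj (1 / (z' - symb r s a w))) * (transpose_mat ?S * adj (calD r s a))"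
    unfolding A_n_def resolv_Km'[OF n0 D z] resolv_Km'[OF n0 D z'] adj_Km[OF n0] Qn_decomp[OF n1]
    by (subst adj_mult[of _ "r+s" "r+s" _ n]) (auto simp: adj_selm)
  also have "\<dots> = calD r s a * (?S * (Km n (\<lambda>w. 1 / (z - symb r s a w)) * Km n (\<lambda>w. cnj (1 / (z' - symb r s a w)))) * transpose_mat ?S) * adj (calD r s a)"
    by (rule assoc_gen2) auto
  also have "Km n (\<lambda>w. 1 / (z - symb r s a w)) * Km n (\<lambda>w. cnj (1 / (z' - symb r s a w))) = Km n (\<lambda>w. 1 / ((z - symb r s a w) * cnj (z' - symb r s a w)))"
    unfolding Km_Km[OF n0] by simp
  finally show "A_n r s a n z z' = calD r s a * (?S * Km n (\<lambda>w. 1 / ((z - symb r s a w) * cnj (z' - symb r s a w))) * transpose_mat ?S) * adj (calD r s a)" .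
next
  fix z z' show "A_lim r s a z z' = calD r s a * moint (r+s) (\<lambda>\<omega>. (1 / (\<omega> * (z - symb r s a \<omega>) * cnj (z' - symb r s a \<omega>))) \<cdot>\<^sub>m
        (dgm r s (\<omega> powi (- int (r+s))) * calF (r+s) \<omega> * dgm r s (\<omega> powi (int (r+s))))) * adj (calD r s a)"
    unfolding A_lim_def ..
qed

lemma conv_B:
  assumes G: "compact \<Gamma>" and D: "\<Gamma> \<inter> symb r s a ` sphere 0 1 = {}"
  shows "unif_conv_mat (r+s) \<Gamma> (\<lambda>n. B_n r s a n) (B_lim r s a)"
proof (rule unif_conv_mat_master[OF G adj_calE_carrier calE_carrier,
   where Nz = "Suc (r+s)"
     and X = "\<lambda>n z z'. selm (r+s) n (sigP r s n) * Km n (\<lambda>w. 1 / ((z - symb r s a w) * cnj (z' - symb r s a w))) * transpose_mat (selm (r+s) n (sigP r s n))"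
     and H = "\<lambda>u v z z' w. 1 / ((z - symb r s a w) * cnj (z' - symb r s a w)) * w powi (int u - int v)"
     and Gm = "\<lambda>z z' \<omega>. (1 / (\<omega> * (z - symb r s a \<omega>) * cnj (z' - symb r s a \<omega>))) \<cdot>\<^sub>m calF (r+s) \<omega>"])
  fix u v assume "u < r + s" "v < r + s"
  show "continuous_on ((\<Gamma> \<times> \<Gamma>) \<times> sphere 0 1) (\<lambda>p. 1 / ((fst (fst p) - symb r s a (snd p)) * cnj (snd (fst p) - symb r s a (snd p))) * snd p powi (int u - int v))"
    by (rule cont_H1[OF D])
next
  fix n z z' show "selm (r+s) n (sigP r s n) * Km n (\<lambda>w. 1 / ((z - symb r s a w) * cnj (z' - symb r s a w))) * transpose_mat (selm (r+s) n (sigP r s n)) \<in> carrier_mat (r+s) (r+s)"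
    by (intro mult_carrier_mat[of _ _ n]) auto
next
  fix n z z' u v assume n: "Suc (r+s) \<le> n" and z: "z \<in> \<Gamma>" and z': "z' \<in> \<Gamma>" and uv: "u < r + s" "v < r + s"
  show "(selm (r+s) n (sigP r s n) * Km n (\<lambda>w. 1 / ((z - symb r s a w) * cnj (z' - symb r s a w))) * transpose_mat (selm (r+s) n (sigP r s n))) $$ (u, v)
     = (\<Sum>m<n. 1 / ((z - symb r s a (om n m)) * cnj (z' - symb r s a (om n m))) * om n m powi (int u - int v)) / of_nat n"
    using n uv by (subst XPK_entry) (auto simp: rho_def)
next
  fix z z' w :: complex and u v :: nat assume z: "z \<in> \<Gamma>" and z': "z' \<in> \<Gamma>" and w: "w \<in> sphere 0 1" and uv: "u < r + s" "v < r + s"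
  have w0: "w \<noteq> 0" using w by auto
  show "((1 / (w * (z - symb r s a w) * cnj (z' - symb r s a w))) \<cdot>\<^sub>m calF (r+s) w) $$ (u, v) * w
      = 1 / ((z - symb r s a w) * cnj (z' - symb r s a w)) * w powi (int u - int v)"
  proof -
    have i: "((1 / (w * (z - symb r s a w) * cnj (z' - symb r s a w))) \<cdot>\<^sub>m calF (r+s) w) $$ (u, v)
        = (1 / (w * (z - symb r s a w) * cnj (z' - symb r s a w))) * w powi (int u - int v)"
      using uv by (simp add: calF_def del: power_int_of_nat)
    show ?thesis unfolding i using cancel_w[OF w0] by simp
  qed
next
  fix n z z' assume n: "Suc (r+s) \<le> n" and z: "z \<in> \<Gamma>" and z': "z' \<in> \<Gamma>"
  have n0: "n > 0" and n1: "n > r + s" using n by auto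
  let ?S = "selm (r+s) n (sigP r s n)"
  have ST: "transpose_mat ?S \<in> carrier_mat n (r+s)" by simp
  have "B_n r s a n z z' = adj (calE r s a) * ?S * Km n (\<lambda>w. cnj (1 / (z' - symb r s a w))) * Km n (\<lambda>w. 1 / (z - symb r s a w)) * (transpose_mat ?S * calE r s a)"
    unfolding B_n_def resolv_Km'[OF n0 D z] resolv_Km'[OF n0 D z'] adj_Km[OF n0] Pn_decomp[OF n1]
    by (subst adj_mult[OF ST calE_carrier]) (simp add: adj_transpose)
  also have "\<dots> = adj (calE r s a) * (?S * (Km n (\<lambda>w. cnj (1 / (z' - symb r s a w))) * Km n (\<lambda>w. 1 / (z - symb r s a w))) * transpose_mat ?S) * calE r s a"
    by (rule assoc_gen2) auto
  also have "Km n (\<lambda>w. cnj (1 / (z' - symb r s a w))) * Km n (\<lambda>w. 1 / (z - symb r s a w)) = Km n (\<lambda>w. 1 / ((z - symb r s a w) * cnj (z' - symb r s a w)))"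
    unfolding Km_Km[OF n0] by (simp add: mult.commute)
  finally show "B_n r s a n z z' = adj (calE r s a) * (?S * Km n (\<lambda>w. 1 / ((z - symb r s a w) * cnj (z' - symb r s a w))) * transpose_mat ?S) * calE r s a" .
next
  fix z z' show "B_lim r s a z z' = adj (calE r s a) * moint (r+s) (\<lambda>\<omega>. (1 / (\<omega> * (z - symb r s a \<omega>) * cnj (z' - symb r s a \<omega>))) \<cdot>\<^sub>m calF (r+s) \<omega>) * calE r s a"
    unfolding B_lim_def ..
qed

lemma fourier_carrier[simp]: "fourier n \<in> carrier_mat n n" "dim_row (fourier n) = n" "dim_col (fourier n) = n"
  unfolding fourier_def by auto

lemma transpose_fourier: "transpose_mat (fourier n) = fourier n"
  by (rule eq_matI) (auto simp: fourier_def mult.commute mult.left_commute)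

lemma fourier_entry: "i < n \<Longrightarrow> j < n \<Longrightarrow> fourier n $$ (i, j) = cis (2 * pi * real i * real j / real n) / of_real (sqrt (real n))"
  unfolding fourier_def by (simp add: cis_conv_exp mult.commute mult.left_commute)

lemma fourier_sq: assumes n: "n > 0" shows "fourier n * fourier n = Lm n (\<lambda>w. 1)"
proof (rule eq_matI)
  fix i j assume "i < dim_row (Lm n (\<lambda>w. 1))" "j < dim_col (Lm n (\<lambda>w. 1))"
  hence ij: "i < n" "j < n" by auto
  have sq: "of_real (sqrt (real n)) * of_real (sqrt (real n)) = (of_nat n :: complex)"
  proof -
    have "of_real (sqrt (real n)) * of_real (sqrt (real n)) = (of_real (sqrt (real n) * sqrt (real n)) :: complex)"
      by (simp only: of_real_mult)
    also have "sqrt (real n) * sqrt (real n) = real n" by simp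
    finally show ?thesis by simp
  qed
  have "(fourier n * fourier n) $$ (i, j) = (\<Sum>l<n. fourier n $$ (i, l) * fourier n $$ (l, j))"
    using ij by (subst mult_entry) auto
  also have "\<dots> = (\<Sum>l<n. cis (2 * pi * real l * of_int (int i + int j) / real n) / of_nat n)"
  proof (rule sum.cong[OF refl])
    fix l assume l: "l \<in> {..<n}"
    have "fourier n $$ (i, l) * fourier n $$ (l, j) = cis (2 * pi * real i * real l / real n) * cis (2 * pi * real l * real j / real n) / (of_real (sqrt (real n)) * of_real (sqrt (real n)))"
      using ij l by (simp add: fourier_entry)
    also have "cis (2 * pi * real i * real l / real n) * cis (2 * pi * real l * real j / real n) = cis (2 * pi * real l * of_int (int i + int j) / real n)"
      unfolding cis_mult by (rule arg_cong[where f=cis]) (simp add: add_divide_distrib algebra_simps)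
    finally show "fourier n $$ (i, l) * fourier n $$ (l, j) = cis (2 * pi * real l * of_int (int i + int j) / real n) / of_nat n"
      unfolding sq .
  qed
  also have "\<dots> = (\<Sum>l<n. cis (2 * pi * real l * of_int (int i + int j) / real n)) / of_nat n"
    by (simp add: sum_divide_distrib)
  also have "\<dots> = rho n (\<lambda>w. 1) (int i + int j)"
    unfolding rho_def by (simp only: om_powi mult_1)
  finally show "(fourier n * fourier n) $$ (i, j) = Lm n (\<lambda>w. 1) $$ (i, j)" using ij by simp
qed auto

lemma cmat_transpose: "cmat (transpose_mat A) = transpose_mat (cmat A)"
  by (rule eq_matI) (auto simp: cmat_def)

lemma fourier_cadj: assumes n: "n > 0" shows "cmat (fourier n) * adj (fourier n) = Lm n (\<lambda>w. 1)"
proof -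
  have "adj (fourier n) = cmat (fourier n)" unfolding adj_is cmat_transpose[symmetric] transpose_fourier ..
  hence "cmat (fourier n) * adj (fourier n) = cmat (fourier n * fourier n)"
    by (simp add: cmat_mult[of _ n n _ n])
  also have "\<dots> = Lm n (\<lambda>w. 1)" unfolding fourier_sq[OF n] cmat_Lm[OF n] by simp
  finally show ?thesis .
qed

lemma fourier_UUT: assumes n: "n > 0" shows "fourier n * transpose_mat (fourier n) = Lm n (\<lambda>w. 1)"
  unfolding transpose_fourier by (rule fourier_sq[OF n])

lemma orth_cadj: assumes "real_orthogonal_cmat n U" shows "cmat U * adj U = 1\<^sub>m n"
proof -
  have U: "U \<in> carrier_mat n n" and UU: "U * transpose_mat U = 1\<^sub>m n" using assms unfolding real_orthogonal_cmat_def by auto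
  have "cmat U * adj U = cmat U * cmat (transpose_mat U)" unfolding adj_is cmat_transpose ..
  also have "\<dots> = cmat (U * transpose_mat U)" using U by (simp add: cmat_mult[of _ n n _ n])
  also have "\<dots> = 1\<^sub>m n" unfolding UU by (rule eq_matI) (auto simp: cmat_def)
  finally show ?thesis .
qed

lemma inv_unit: "cmod w = 1 \<Longrightarrow> inverse w = cnj w"
  by (metis complex_norm_square inverse_unique mult.commute mult_1 of_real_1 one_power2 power2_eq_square)

lemma powi_m1_sphere: "w \<in> sphere (0::complex) 1 \<Longrightarrow> w powi (-1) = cnj w"
  using cnj_powi_unit[of w 1] by simp

lemma tr_assoc5:
  fixes A K1 K2 K3 K4 K5 :: "complex mat"
  assumes A: "A \<in> carrier_mat n n" and K1: "K1 \<in> carrier_mat n n" and K2: "K2 \<in> carrier_mat n n"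
    and K3: "K3 \<in> carrier_mat n n" and K4: "K4 \<in> carrier_mat n n" and K5: "K5 \<in> carrier_mat n n"
  shows "tr (A * K1 * K2 * K3 * K4 * K5) = tr (K1 * (K2 * K3) * K4 * (K5 * A))"
proof -
  have AK1: "A * K1 \<in> carrier_mat n n" using A K1 by simp
  have K23: "K2 * K3 \<in> carrier_mat n n" using K2 K3 by simp
  have W1: "K1 * (K2 * K3) \<in> carrier_mat n n" using K1 K23 by simp
  have W2: "K1 * (K2 * K3) * K4 \<in> carrier_mat n n" using W1 K4 by simp
  have W3: "K1 * (K2 * K3) * K4 * K5 \<in> carrier_mat n n" using W2 K5 by simp
  have "A * K1 * K2 * K3 = A * K1 * (K2 * K3)" using assoc_mult_mat[OF AK1 K2 K3] .
  also have "\<dots> = A * (K1 * (K2 * K3))" using assoc_mult_mat[OF A K1 K23] .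
  finally have e1: "A * K1 * K2 * K3 * K4 * K5 = A * (K1 * (K2 * K3)) * K4 * K5" by simp
  have e2: "A * (K1 * (K2 * K3)) * K4 = A * (K1 * (K2 * K3) * K4)" using assoc_mult_mat[OF A W1 K4] .
  have e3: "A * (K1 * (K2 * K3) * K4) * K5 = A * (K1 * (K2 * K3) * K4 * K5)" using assoc_mult_mat[OF A W2 K5] .
  have "tr (A * K1 * K2 * K3 * K4 * K5) = tr (A * (K1 * (K2 * K3) * K4 * K5))" unfolding e1 e2 e3 ..
  also have "\<dots> = tr ((K1 * (K2 * K3) * K4 * K5) * A)" by (rule tr_comm[OF A W3])
  also have "(K1 * (K2 * K3) * K4 * K5) * A = K1 * (K2 * K3) * K4 * (K5 * A)" using assoc_mult_mat[OF W2 K5 A] .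
  finally show ?thesis .
qed

lemma cont_H2:
  assumes D: "\<Gamma> \<inter> symb r s a ` sphere 0 1 = {}"
  shows "continuous_on ((\<Gamma> \<times> \<Gamma>) \<times> sphere 0 1) (\<lambda>p. 1 / ((fst (fst p) - symb r s a (snd p)) * (snd (fst p) - symb r s a (snd p))) * snd p powi e)"
proof -
  let ?S = "(\<Gamma> \<times> \<Gamma>) \<times> sphere (0::complex) 1"
  have c0: "continuous_on ?S (\<lambda>p. symb r s a (snd p))"
    by (rule cont_symb) (auto intro!: continuous_intros)
  show ?thesis
    using symb_nz[OF D] by (intro continuous_intros c0) auto
qed

lemma cont_H3:
  assumes D: "\<Gamma> \<inter> symb r s a ` sphere 0 1 = {}"
  shows "continuous_on ((\<Gamma> \<times> \<Gamma>) \<times> sphere 0 1) (\<lambda>p. 1 / ((fst (fst p) - symb r s a (snd p)) * (snd (fst p) - symb r s a (cnj (snd p)))) * snd p powi e)"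
proof -
  let ?S = "(\<Gamma> \<times> \<Gamma>) \<times> sphere (0::complex) 1"
  have c0: "continuous_on ?S (\<lambda>p. symb r s a (snd p))"
    by (rule cont_symb) (auto intro!: continuous_intros)
  have c1: "continuous_on ?S (\<lambda>p. symb r s a (cnj (snd p)))"
    by (rule cont_symb) (auto intro!: continuous_intros)
  have nz: "snd (fst p) - symb r s a (cnj (snd p)) \<noteq> 0" if "p \<in> ?S" for p
    using that symb_nz[OF D, of "snd (fst p)" "cnj (snd p)"] by auto
  show ?thesis
    using symb_nz[OF D] nz by (intro continuous_intros c0 c1) auto
qed

lemma conv_theta'_F:
  assumes G: "compact \<Gamma>" and D: "\<Gamma> \<inter> symb r s a ` sphere 0 1 = {}"
  shows "unif_conv \<Gamma> (\<lambda>n. theta'_n r s a (fourier n) n) (theta_eps 1 r s a)"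
proof (rule unif_conv_riemann[OF G, where Nz = "Suc 0" and H = "\<lambda>z z' w. 1 / ((z - symb r s a w) * (z' - symb r s a w))"])
  show "continuous_on ((\<Gamma> \<times> \<Gamma>) \<times> sphere 0 1) (\<lambda>p. 1 / ((fst (fst p) - symb r s a (snd p)) * (snd (fst p) - symb r s a (snd p))))"
    using cont_H2[OF D, of 0] by simp
next
  fix n z z' assume n: "Suc 0 \<le> n" and z: "z \<in> \<Gamma>" and z': "z' \<in> \<Gamma>"
  hence n0: "n > 0" by simp
  let ?F = "fourier n"
  have "theta'_n r s a ?F n z z' = tr (adj ?F * Km n (\<lambda>w. 1 / (z - symb r s a w)) * ?F * transpose_mat ?F * Km n (\<lambda>w. 1 / (z' - symb r s a (cnj w))) * cmat ?F) / of_nat n"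
    unfolding theta'_n_def resolv_Km'[OF n0 D z] resolv_Km'[OF n0 D z'] transpose_Km[OF n0] ..
  also have "tr (adj ?F * Km n (\<lambda>w. 1 / (z - symb r s a w)) * ?F * transpose_mat ?F * Km n (\<lambda>w. 1 / (z' - symb r s a (cnj w))) * cmat ?F)
     = tr (Km n (\<lambda>w. 1 / (z - symb r s a w)) * (?F * transpose_mat ?F) * Km n (\<lambda>w. 1 / (z' - symb r s a (cnj w))) * (cmat ?F * adj ?F))"
    by (rule tr_assoc5) (auto simp: adj_def cmat_def)
  also have "\<dots> = (\<Sum>m<n. 1 / ((z - symb r s a (om n m)) * (z' - symb r s a (om n m))))"
    unfolding fourier_UUT[OF n0] fourier_cadj[OF n0] Km_Lm[OF n0] Lm_Km[OF n0] Lm_Lm[OF n0] tr_Km[OF n0]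
    by simp
  finally show "theta'_n r s a ?F n z z' = (\<Sum>m<n. 1 / ((z - symb r s a (om n m)) * (z' - symb r s a (om n m)))) / of_nat n" .
next
  fix z z' assume z: "z \<in> \<Gamma>" and z': "z' \<in> \<Gamma>"
  show "theta_eps 1 r s a z z' = integral {0..2*pi} (\<lambda>t. 1 / ((z - symb r s a (cis t)) * (z' - symb r s a (cis t)))) / (2*pi)"
    unfolding theta_eps_def by (rule oint_eq) (auto simp: sphere_nz)
qed

lemma conv_theta'_O:
  assumes G: "compact \<Gamma>" and D: "\<Gamma> \<inter> symb r s a ` sphere 0 1 = {}"
    and U: "\<And>n. real_orthogonal_cmat n (U n)"
  shows "unif_conv \<Gamma> (\<lambda>n. theta'_n r s a (U n) n) (theta_eps (-1) r s a)"
proof (rule unif_conv_riemann[OF G, where Nz = "Suc 0" and H = "\<lambda>z z' w. 1 / ((z - symb r s a w) * (z' - symb r s a (cnj w)))"])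
  show "continuous_on ((\<Gamma> \<times> \<Gamma>) \<times> sphere 0 1) (\<lambda>p. 1 / ((fst (fst p) - symb r s a (snd p)) * (snd (fst p) - symb r s a (cnj (snd p)))))"
    using cont_H3[OF D, of 0] by simp
next
  fix n z z' assume n: "Suc 0 \<le> n" and z: "z \<in> \<Gamma>" and z': "z' \<in> \<Gamma>"
  hence n0: "n > 0" by simp
  have Uc: "U n \<in> carrier_mat n n" and UU: "U n * transpose_mat (U n) = 1\<^sub>m n"
    using U[of n] unfolding real_orthogonal_cmat_def by auto
  have "theta'_n r s a (U n) n z z' = tr (adj (U n) * Km n (\<lambda>w. 1 / (z - symb r s a w)) * U n * transpose_mat (U n) * Km n (\<lambda>w. 1 / (z' - symb r s a (cnj w))) * cmat (U n)) / of_nat n"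
    unfolding theta'_n_def resolv_Km'[OF n0 D z] resolv_Km'[OF n0 D z'] transpose_Km[OF n0] ..
  also have "tr (adj (U n) * Km n (\<lambda>w. 1 / (z - symb r s a w)) * U n * transpose_mat (U n) * Km n (\<lambda>w. 1 / (z' - symb r s a (cnj w))) * cmat (U n))
     = tr (Km n (\<lambda>w. 1 / (z - symb r s a w)) * (U n * transpose_mat (U n)) * Km n (\<lambda>w. 1 / (z' - symb r s a (cnj w))) * (cmat (U n) * adj (U n)))"
    by (rule tr_assoc5) (use Uc in \<open>auto simp: adj_def cmat_def\<close>)
  also have "\<dots> = (\<Sum>m<n. 1 / ((z - symb r s a (om n m)) * (z' - symb r s a (cnj (om n m)))))"
    unfolding UU orth_cadj[OF U] by (simp add: Km_Km[OF n0] tr_Km[OF n0])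
  finally show "theta'_n r s a (U n) n z z' = (\<Sum>m<n. 1 / ((z - symb r s a (om n m)) * (z' - symb r s a (cnj (om n m))))) / of_nat n" .
next
  fix z z' assume z: "z \<in> \<Gamma>" and z': "z' \<in> \<Gamma>"
  show "theta_eps (-1) r s a z z' = integral {0..2*pi} (\<lambda>t. 1 / ((z - symb r s a (cis t)) * (z' - symb r s a (cnj (cis t))))) / (2*pi)"
    unfolding theta_eps_def by (rule oint_eq) (auto simp: sphere_nz inv_unit)
qed

lemma transpose_calD_carrier[simp]: "transpose_mat (calD r s a) \<in> carrier_mat (r+s) (r+s)" by simp
lemma transpose_calE_carrier[simp]: "transpose_mat (calE r s a) \<in> carrier_mat (r+s) (r+s)" by simp

lemma dgm_calF1_entry:
  assumes uv: "u < r + s" "v < r + s" and w: "w \<noteq> 0"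
  shows "(dgm r s (w powi (- int (r+s))) * calFeps 1 (r+s) w * dgm r s (w powi (- 1 * int (r+s)))) $$ (u, v)
       = w powi (tauQ r s u + tauQ r s v)"
proof -
  have "(dgm r s (w powi (- int (r+s))) * calFeps 1 (r+s) w * dgm r s (w powi (- 1 * int (r+s)))) $$ (u, v)
      = w powi ((if u < s then 0 else - int (r+s)) + (int (u+1) + int (v+1) - 2) + (if v < s then 0 else - int (r+s)))"
    using uv by (simp add: dgm_triple_entry calFeps_def calF1_def pw_comb[OF w] del: power_int_of_nat of_nat_add)
  also have "(if u < s then 0 else - int (r+s)) + (int (u+1) + int (v+1) - 2) + (if v < s then 0 else - int (r+s)) = tauQ r s u + tauQ r s v"
    by (simp add: tauQ_def)
  finally show ?thesis .
qed

lemma dgm_calFm1_entry: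
  assumes uv: "u < r + s" "v < r + s" and w: "w \<noteq> 0"
  shows "(dgm r s (w powi (- int (r+s))) * calFeps (-1) (r+s) w * dgm r s (w powi (- (-1) * int (r+s)))) $$ (u, v)
       = w powi (tauQ r s u - tauQ r s v)"
  using dgm_calF_entry[OF uv w] by (simp add: calFeps_def)

lemma conv_A'_F:
  assumes G: "compact \<Gamma>" and D: "\<Gamma> \<inter> symb r s a ` sphere 0 1 = {}"
  shows "unif_conv_mat (r+s) \<Gamma> (\<lambda>n. A'_n r s a (fourier n) n) (A_eps 1 r s a)"
proof (rule unif_conv_mat_master[OF G calD_carrier transpose_calD_carrier,
   where Nz = "Suc (r+s)"
     and X = "\<lambda>n z z'. selm (r+s) n (sigQ r s n) * Lm n (\<lambda>w. 1 / ((z - symb r s a w) * (z' - symb r s a w))) * transpose_mat (selm (r+s) n (sigQ r s n))"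
     and H = "\<lambda>u v z z' w. 1 / ((z - symb r s a w) * (z' - symb r s a w)) * w powi (tauQ r s u + tauQ r s v)"
     and Gm = "\<lambda>z z' \<omega>. (1 / (\<omega> * (z - symb r s a \<omega>) * (z' - symb r s a (\<omega> powi 1)))) \<cdot>\<^sub>m
        (dgm r s (\<omega> powi (- int (r+s))) * calFeps 1 (r+s) \<omega> * dgm r s (\<omega> powi (- 1 * int (r+s))))"])
  fix u v assume "u < r + s" "v < r + s"
  show "continuous_on ((\<Gamma> \<times> \<Gamma>) \<times> sphere 0 1) (\<lambda>p. 1 / ((fst (fst p) - symb r s a (snd p)) * (snd (fst p) - symb r s a (snd p))) * snd p powi (tauQ r s u + tauQ r s v))"
    by (rule cont_H2[OF D])
next
  fix n z z' show "selm (r+s) n (sigQ r s n) * Lm n (\<lambda>w. 1 / ((z - symb r s a w) * (z' - symb r s a w))) * transpose_mat (selm (r+s) n (sigQ r s n)) \<in> carrier_mat (r+s) (r+s)"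
    by (intro mult_carrier_mat[of _ _ n]) auto
next
  fix n z z' u v assume n: "Suc (r+s) \<le> n" and z: "z \<in> \<Gamma>" and z': "z' \<in> \<Gamma>" and uv: "u < r + s" "v < r + s"
  show "(selm (r+s) n (sigQ r s n) * Lm n (\<lambda>w. 1 / ((z - symb r s a w) * (z' - symb r s a w))) * transpose_mat (selm (r+s) n (sigQ r s n))) $$ (u, v)
     = (\<Sum>m<n. 1 / ((z - symb r s a (om n m)) * (z' - symb r s a (om n m))) * om n m powi (tauQ r s u + tauQ r s v)) / of_nat n"
    using n uv by (subst XQL_entry) (auto simp: rho_def)
next
  fix z z' w :: complex and u v :: nat assume z: "z \<in> \<Gamma>" and z': "z' \<in> \<Gamma>" and w: "w \<in> sphere 0 1" and uv: "u < r + s" "v < r + s"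
  have w0: "w \<noteq> 0" using w by auto
  have e: "(dgm r s (w powi (- int (r+s))) * calFeps 1 (r+s) w * dgm r s (w powi (- 1 * int (r+s)))) $$ (u, v) = w powi (tauQ r s u + tauQ r s v)"
    by (rule dgm_calF1_entry[OF uv w0])
  have d: "(dgm r s (w powi (- int (r+s))) * calFeps 1 (r+s) w * dgm r s (w powi (- 1 * int (r+s)))) \<in> carrier_mat (r+s) (r+s)"
    by (intro mult_carrier_mat[of _ _ "r+s"]) (auto simp: calFeps_def)
  show "((1 / (w * (z - symb r s a w) * (z' - symb r s a (w powi 1)))) \<cdot>\<^sub>m
        (dgm r s (w powi (- int (r+s))) * calFeps 1 (r+s) w * dgm r s (w powi (- 1 * int (r+s))))) $$ (u, v) * w
      = 1 / ((z - symb r s a w) * (z' - symb r s a w)) * w powi (tauQ r s u + tauQ r s v)"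
    (is "(?c \<cdot>\<^sub>m ?M) $$ (u, v) * w = ?rhs")
  proof -
    have i: "(?c \<cdot>\<^sub>m ?M) $$ (u, v) = ?c * ?M $$ (u, v)" by (rule index_smult_mat(1)) (use d uv in auto)
    show ?thesis unfolding i e using cancel_w[OF w0] by simp
  qed
next
  fix n z z' assume n: "Suc (r+s) \<le> n" and z: "z \<in> \<Gamma>" and z': "z' \<in> \<Gamma>"
  have n0: "n > 0" and n1: "n > r + s" using n by auto
  let ?S = "selm (r+s) n (sigQ r s n)"
  let ?F = "fourier n"
  have "A'_n r s a ?F n z z' = calD r s a * ?S * Km n (\<lambda>w. 1 / (z - symb r s a w)) * ?F * transpose_mat ?F * Km n (\<lambda>w. 1 / (z' - symb r s a (cnj w))) * (transpose_mat ?S * transpose_mat (calD r s a))"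
    unfolding A'_n_def resolv_Km'[OF n0 D z] resolv_Km'[OF n0 D z'] transpose_Km[OF n0] Qn_decomp[OF n1]
    by (subst transpose_mult[OF calD_carrier selm_dims(3)]) simp
  also have "\<dots> = calD r s a * (?S * (Km n (\<lambda>w. 1 / (z - symb r s a w)) * (?F * transpose_mat ?F) * Km n (\<lambda>w. 1 / (z' - symb r s a (cnj w)))) * transpose_mat ?S) * transpose_mat (calD r s a)"
    by (rule assoc_gen4) auto
  also have "Km n (\<lambda>w. 1 / (z - symb r s a w)) * (?F * transpose_mat ?F) * Km n (\<lambda>w. 1 / (z' - symb r s a (cnj w))) = Lm n (\<lambda>w. 1 / ((z - symb r s a w) * (z' - symb r s a w)))"
    unfolding fourier_UUT[OF n0] Km_Lm[OF n0] Lm_Km[OF n0] by simp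
  finally show "A'_n r s a ?F n z z' = calD r s a * (?S * Lm n (\<lambda>w. 1 / ((z - symb r s a w) * (z' - symb r s a w))) * transpose_mat ?S) * transpose_mat (calD r s a)" .
next
  fix z z' show "A_eps 1 r s a z z' = calD r s a * moint (r+s) (\<lambda>\<omega>. (1 / (\<omega> * (z - symb r s a \<omega>) * (z' - symb r s a (\<omega> powi 1)))) \<cdot>\<^sub>m
        (dgm r s (\<omega> powi (- int (r+s))) * calFeps 1 (r+s) \<omega> * dgm r s (\<omega> powi (- 1 * int (r+s))))) * transpose_mat (calD r s a)"
    unfolding A_eps_def ..
qed

lemma conv_A'_O:
  assumes G: "compact \<Gamma>" and D: "\<Gamma> \<inter> symb r s a ` sphere 0 1 = {}"
    and U: "\<And>n. real_orthogonal_cmat n (U n)"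
  shows "unif_conv_mat (r+s) \<Gamma> (\<lambda>n. A'_n r s a (U n) n) (A_eps (-1) r s a)"
proof (rule unif_conv_mat_master[OF G calD_carrier transpose_calD_carrier,
   where Nz = "Suc (r+s)"
     and X = "\<lambda>n z z'. selm (r+s) n (sigQ r s n) * Km n (\<lambda>w. 1 / ((z - symb r s a w) * (z' - symb r s a (cnj w)))) * transpose_mat (selm (r+s) n (sigQ r s n))"
     and H = "\<lambda>u v z z' w. 1 / ((z - symb r s a w) * (z' - symb r s a (cnj w))) * w powi (tauQ r s u - tauQ r s v)"
     and Gm = "\<lambda>z z' \<omega>. (1 / (\<omega> * (z - symb r s a \<omega>) * (z' - symb r s a (\<omega> powi (-1))))) \<cdot>\<^sub>m
        (dgm r s (\<omega> powi (- int (r+s))) * calFeps (-1) (r+s) \<omega> * dgm r s (\<omega> powi (- (-1) * int (r+s))))"])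
  fix u v assume "u < r + s" "v < r + s"
  show "continuous_on ((\<Gamma> \<times> \<Gamma>) \<times> sphere 0 1) (\<lambda>p. 1 / ((fst (fst p) - symb r s a (snd p)) * (snd (fst p) - symb r s a (cnj (snd p)))) * snd p powi (tauQ r s u - tauQ r s v))"
    by (rule cont_H3[OF D])
next
  fix n z z' show "selm (r+s) n (sigQ r s n) * Km n (\<lambda>w. 1 / ((z - symb r s a w) * (z' - symb r s a (cnj w)))) * transpose_mat (selm (r+s) n (sigQ r s n)) \<in> carrier_mat (r+s) (r+s)"
    by (intro mult_carrier_mat[of _ _ n]) auto
next
  fix n z z' u v assume n: "Suc (r+s) \<le> n" and z: "z \<in> \<Gamma>" and z': "z' \<in> \<Gamma>" and uv: "u < r + s" "v < r + s"
  show "(selm (r+s) n (sigQ r s n) * Km n (\<lambda>w. 1 / ((z - symb r s a w) * (z' - symb r s a (cnj w)))) * transpose_mat (selm (r+s) n (sigQ r s n))) $$ (u, v)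
     = (\<Sum>m<n. 1 / ((z - symb r s a (om n m)) * (z' - symb r s a (cnj (om n m)))) * om n m powi (tauQ r s u - tauQ r s v)) / of_nat n"
    using n uv by (subst XQK_entry) (auto simp: rho_def)
next
  fix z z' w :: complex and u v :: nat assume z: "z \<in> \<Gamma>" and z': "z' \<in> \<Gamma>" and w: "w \<in> sphere 0 1" and uv: "u < r + s" "v < r + s"
  have w0: "w \<noteq> 0" using w by auto
  have e: "(dgm r s (w powi (- int (r+s))) * calFeps (-1) (r+s) w * dgm r s (w powi (- (-1) * int (r+s)))) $$ (u, v) = w powi (tauQ r s u - tauQ r s v)"
    by (rule dgm_calFm1_entry[OF uv w0])
  have d: "(dgm r s (w powi (- int (r+s))) * calFeps (-1) (r+s) w * dgm r s (w powi (- (-1) * int (r+s)))) \<in> carrier_mat (r+s) (r+s)"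
    by (intro mult_carrier_mat[of _ _ "r+s"]) (auto simp: calFeps_def)
  have wi: "w powi (-1) = cnj w" using powi_m1_sphere[OF w] .
  show "((1 / (w * (z - symb r s a w) * (z' - symb r s a (w powi (-1))))) \<cdot>\<^sub>m
        (dgm r s (w powi (- int (r+s))) * calFeps (-1) (r+s) w * dgm r s (w powi (- (-1) * int (r+s))))) $$ (u, v) * w
      = 1 / ((z - symb r s a w) * (z' - symb r s a (cnj w))) * w powi (tauQ r s u - tauQ r s v)"
    (is "(?c \<cdot>\<^sub>m ?M) $$ (u, v) * w = ?rhs")
  proof -
    have i: "(?c \<cdot>\<^sub>m ?M) $$ (u, v) = ?c * ?M $$ (u, v)" by (rule index_smult_mat(1)) (use d uv in auto)
    show ?thesis unfolding i e unfolding wi using cancel_w[OF w0] by simp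
  qed
next
  fix n z z' assume n: "Suc (r+s) \<le> n" and z: "z \<in> \<Gamma>" and z': "z' \<in> \<Gamma>"
  have n0: "n > 0" and n1: "n > r + s" using n by auto
  have Uc: "U n \<in> carrier_mat n n" and UU: "U n * transpose_mat (U n) = 1\<^sub>m n"
    using U[of n] unfolding real_orthogonal_cmat_def by auto
  let ?S = "selm (r+s) n (sigQ r s n)"
  have "A'_n r s a (U n) n z z' = calD r s a * ?S * Km n (\<lambda>w. 1 / (z - symb r s a w)) * U n * transpose_mat (U n) * Km n (\<lambda>w. 1 / (z' - symb r s a (cnj w))) * (transpose_mat ?S * transpose_mat (calD r s a))"
    unfolding A'_n_def resolv_Km'[OF n0 D z] resolv_Km'[OF n0 D z'] transpose_Km[OF n0] Qn_decomp[OF n1]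
    by (subst transpose_mult[OF calD_carrier selm_dims(3)]) simp
  also have "\<dots> = calD r s a * (?S * (Km n (\<lambda>w. 1 / (z - symb r s a w)) * (U n * transpose_mat (U n)) * Km n (\<lambda>w. 1 / (z' - symb r s a (cnj w)))) * transpose_mat ?S) * transpose_mat (calD r s a)"
    by (rule assoc_gen4) (use Uc in auto)
  also have "Km n (\<lambda>w. 1 / (z - symb r s a w)) * (U n * transpose_mat (U n)) * Km n (\<lambda>w. 1 / (z' - symb r s a (cnj w))) = Km n (\<lambda>w. 1 / ((z - symb r s a w) * (z' - symb r s a (cnj w))))"
    unfolding UU by (simp add: Km_Km[OF n0])
  finally show "A'_n r s a (U n) n z z' = calD r s a * (?S * Km n (\<lambda>w. 1 / ((z - symb r s a w) * (z' - symb r s a (cnj w)))) * transpose_mat ?S) * transpose_mat (calD r s a)" .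
next
  fix z z' show "A_eps (-1) r s a z z' = calD r s a * moint (r+s) (\<lambda>\<omega>. (1 / (\<omega> * (z - symb r s a \<omega>) * (z' - symb r s a (\<omega> powi (-1))))) \<cdot>\<^sub>m
        (dgm r s (\<omega> powi (- int (r+s))) * calFeps (-1) (r+s) \<omega> * dgm r s (\<omega> powi (- (-1) * int (r+s))))) * transpose_mat (calD r s a)"
    unfolding A_eps_def ..
qed

lemma conv_B'_O:
  assumes G: "compact \<Gamma>" and D: "\<Gamma> \<inter> symb r s a ` sphere 0 1 = {}"
    and U: "\<And>n. real_orthogonal_cmat n (U n)"
  shows "unif_conv_mat (r+s) \<Gamma> (\<lambda>n. B'_n r s a (U n) n) (B_eps (-1) r s a)"
proof (rule unif_conv_mat_master[OF G transpose_calE_carrier calE_carrier,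
   where Nz = "Suc (r+s)"
     and X = "\<lambda>n z z'. selm (r+s) n (sigP r s n) * Km n (\<lambda>w. 1 / ((z - symb r s a w) * (z' - symb r s a (cnj w)))) * transpose_mat (selm (r+s) n (sigP r s n))"
     and H = "\<lambda>u v z z' w. 1 / ((z - symb r s a w) * (z' - symb r s a (cnj w))) * w powi (int u - int v)"
     and Gm = "\<lambda>z z' \<omega>. (1 / (\<omega> * (z - symb r s a \<omega>) * (z' - symb r s a (\<omega> powi (-1))))) \<cdot>\<^sub>m calFeps' (-1) (r+s) s \<omega>"])
  fix u v assume "u < r + s" "v < r + s"
  show "continuous_on ((\<Gamma> \<times> \<Gamma>) \<times> sphere 0 1) (\<lambda>p. 1 / ((fst (fst p) - symb r s a (snd p)) * (snd (fst p) - symb r s a (cnj (snd p)))) * snd p powi (int u - int v))"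
    by (rule cont_H3[OF D])
next
  fix n z z' show "selm (r+s) n (sigP r s n) * Km n (\<lambda>w. 1 / ((z - symb r s a w) * (z' - symb r s a (cnj w)))) * transpose_mat (selm (r+s) n (sigP r s n)) \<in> carrier_mat (r+s) (r+s)"
    by (intro mult_carrier_mat[of _ _ n]) auto
next
  fix n z z' u v assume n: "Suc (r+s) \<le> n" and z: "z \<in> \<Gamma>" and z': "z' \<in> \<Gamma>" and uv: "u < r + s" "v < r + s"
  show "(selm (r+s) n (sigP r s n) * Km n (\<lambda>w. 1 / ((z - symb r s a w) * (z' - symb r s a (cnj w)))) * transpose_mat (selm (r+s) n (sigP r s n))) $$ (u, v)
     = (\<Sum>m<n. 1 / ((z - symb r s a (om n m)) * (z' - symb r s a (cnj (om n m)))) * om n m powi (int u - int v)) / of_nat n"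
    using n uv by (subst XPK_entry) (auto simp: rho_def)
next
  fix z z' w :: complex and u v :: nat assume z: "z \<in> \<Gamma>" and z': "z' \<in> \<Gamma>" and w: "w \<in> sphere 0 1" and uv: "u < r + s" "v < r + s"
  have w0: "w \<noteq> 0" using w by auto
  have wi: "w powi (-1) = cnj w" using powi_m1_sphere[OF w] .
  have i: "((1 / (w * (z - symb r s a w) * (z' - symb r s a (w powi (-1))))) \<cdot>\<^sub>m calFeps' (-1) (r+s) s w) $$ (u, v)
        = (1 / (w * (z - symb r s a w) * (z' - symb r s a (w powi (-1))))) * w powi (int u - int v)"
    using uv by (simp add: calFeps'_def calF_def del: power_int_of_nat)
  show "((1 / (w * (z - symb r s a w) * (z' - symb r s a (w powi (-1))))) \<cdot>\<^sub>m calFeps' (-1) (r+s) s w) $$ (u, v) * w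
      = 1 / ((z - symb r s a w) * (z' - symb r s a (cnj w))) * w powi (int u - int v)"
    unfolding i unfolding wi using cancel_w[OF w0] by simp
next
  fix n z z' assume n: "Suc (r+s) \<le> n" and z: "z \<in> \<Gamma>" and z': "z' \<in> \<Gamma>"
  have n0: "n > 0" and n1: "n > r + s" using n by auto
  have Uc: "U n \<in> carrier_mat n n" using U[of n] unfolding real_orthogonal_cmat_def by auto
  let ?S = "selm (r+s) n (sigP r s n)"
  have ST: "transpose_mat ?S \<in> carrier_mat n (r+s)" by simp
  have "B'_n r s a (U n) n z z' = transpose_mat (calE r s a) * ?S * Km n (\<lambda>w. 1 / (z' - symb r s a (cnj w))) * cmat (U n) * adj (U n) * Km n (\<lambda>w. 1 / (z - symb r s a w)) * (transpose_mat ?S * calE r s a)"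
    unfolding B'_n_def resolv_Km'[OF n0 D z] resolv_Km'[OF n0 D z'] transpose_Km[OF n0] Pn_decomp[OF n1]
    by (subst transpose_mult[OF ST calE_carrier]) simp
  also have "\<dots> = transpose_mat (calE r s a) * (?S * (Km n (\<lambda>w. 1 / (z' - symb r s a (cnj w))) * (cmat (U n) * adj (U n)) * Km n (\<lambda>w. 1 / (z - symb r s a w))) * transpose_mat ?S) * calE r s a"
    by (rule assoc_gen4) (use Uc in \<open>auto simp: adj_def cmat_def\<close>)
  also have "Km n (\<lambda>w. 1 / (z' - symb r s a (cnj w))) * (cmat (U n) * adj (U n)) * Km n (\<lambda>w. 1 / (z - symb r s a w)) = Km n (\<lambda>w. 1 / ((z - symb r s a w) * (z' - symb r s a (cnj w))))"
    unfolding orth_cadj[OF U] by (simp add: Km_Km[OF n0] mult.commute)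
  finally show "B'_n r s a (U n) n z z' = transpose_mat (calE r s a) * (?S * Km n (\<lambda>w. 1 / ((z - symb r s a w) * (z' - symb r s a (cnj w)))) * transpose_mat ?S) * calE r s a" .
next
  fix z z' show "B_eps (-1) r s a z z' = transpose_mat (calE r s a) * moint (r+s) (\<lambda>\<omega>. (1 / (\<omega> * (z - symb r s a \<omega>) * (z' - symb r s a (\<omega> powi (-1))))) \<cdot>\<^sub>m calFeps' (-1) (r+s) s \<omega>) * calE r s a"
    unfolding B_eps_def ..
qed

lemma conv_B'_F:
  assumes G: "compact \<Gamma>" and D: "\<Gamma> \<inter> symb r s a ` sphere 0 1 = {}"
  shows "unif_conv_mat (r+s) \<Gamma> (\<lambda>n. B'_n r s a (fourier n) n) (B_eps 1 r s a)"
proof (rule unif_conv_mat_master[OF G transpose_calE_carrier calE_carrier,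
   where Nz = "Suc (r+s)"
     and X = "\<lambda>n z z'. selm (r+s) n (sigP r s n) * Lm n (\<lambda>w. 1 / ((z - symb r s a (cnj w)) * (z' - symb r s a (cnj w)))) * transpose_mat (selm (r+s) n (sigP r s n))"
     and H = "\<lambda>u v z z' w. 1 / ((z - symb r s a w) * (z' - symb r s a w)) * w powi (2 * int s - int u - int v)"
     and Gm = "\<lambda>z z' \<omega>. (1 / (\<omega> * (z - symb r s a \<omega>) * (z' - symb r s a (\<omega> powi 1)))) \<cdot>\<^sub>m calFeps' 1 (r+s) s \<omega>"])
  fix u v assume "u < r + s" "v < r + s"
  show "continuous_on ((\<Gamma> \<times> \<Gamma>) \<times> sphere 0 1) (\<lambda>p. 1 / ((fst (fst p) - symb r s a (snd p)) * (snd (fst p) - symb r s a (snd p))) * snd p powi (2 * int s - int u - int v))"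
    by (rule cont_H2[OF D])
next
  fix n z z' show "selm (r+s) n (sigP r s n) * Lm n (\<lambda>w. 1 / ((z - symb r s a (cnj w)) * (z' - symb r s a (cnj w)))) * transpose_mat (selm (r+s) n (sigP r s n)) \<in> carrier_mat (r+s) (r+s)"
    by (intro mult_carrier_mat[of _ _ n]) auto
next
  fix n z z' u v assume n: "Suc (r+s) \<le> n" and z: "z \<in> \<Gamma>" and z': "z' \<in> \<Gamma>" and uv: "u < r + s" "v < r + s"
  have n0: "n > 0" using n by simp
  have "(selm (r+s) n (sigP r s n) * Lm n (\<lambda>w. 1 / ((z - symb r s a (cnj w)) * (z' - symb r s a (cnj w)))) * transpose_mat (selm (r+s) n (sigP r s n))) $$ (u, v)
     = rho n (\<lambda>w. 1 / ((z - symb r s a (cnj w)) * (z' - symb r s a (cnj w)))) (int u + int v - 2 * int s)"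
    using n uv by (subst XPL_entry) auto
  also have "\<dots> = rho n (\<lambda>w. 1 / ((z - symb r s a (cnj (cnj w))) * (z' - symb r s a (cnj (cnj w))))) (- (int u + int v - 2 * int s))"
    by (rule rho_refl'[OF n0])
  also have "- (int u + int v - 2 * int s) = 2 * int s - int u - int v" by simp
  finally show "(selm (r+s) n (sigP r s n) * Lm n (\<lambda>w. 1 / ((z - symb r s a (cnj w)) * (z' - symb r s a (cnj w)))) * transpose_mat (selm (r+s) n (sigP r s n))) $$ (u, v)
     = (\<Sum>m<n. 1 / ((z - symb r s a (om n m)) * (z' - symb r s a (om n m))) * om n m powi (2 * int s - int u - int v)) / of_nat n"
    by (simp add: rho_def)
next
  fix z z' w :: complex and u v :: nat assume z: "z \<in> \<Gamma>" and z': "z' \<in> \<Gamma>" and w: "w \<in> sphere 0 1" and uv: "u < r + s" "v < r + s"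
  have w0: "w \<noteq> 0" using w by auto
  have ex: "2 * int s + 2 - (int (u + 1) + int (v + 1)) = 2 * int s - int u - int v" by simp
  have i: "((1 / (w * (z - symb r s a w) * (z' - symb r s a (w powi 1)))) \<cdot>\<^sub>m calFeps' 1 (r+s) s w) $$ (u, v)
        = (1 / (w * (z - symb r s a w) * (z' - symb r s a (w powi 1)))) * w powi (2 * int s - int u - int v)"
    using uv by (simp add: calFeps'_def calF1'_def ex[symmetric] del: power_int_of_nat of_nat_add)
  show "((1 / (w * (z - symb r s a w) * (z' - symb r s a (w powi 1)))) \<cdot>\<^sub>m calFeps' 1 (r+s) s w) $$ (u, v) * w
      = 1 / ((z - symb r s a w) * (z' - symb r s a w)) * w powi (2 * int s - int u - int v)"
    unfolding i using cancel_w[OF w0] by simp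
next
  fix n z z' assume n: "Suc (r+s) \<le> n" and z: "z \<in> \<Gamma>" and z': "z' \<in> \<Gamma>"
  have n0: "n > 0" and n1: "n > r + s" using n by auto
  let ?F = "fourier n"
  let ?S = "selm (r+s) n (sigP r s n)"
  have ST: "transpose_mat ?S \<in> carrier_mat n (r+s)" by simp
  have "B'_n r s a ?F n z z' = transpose_mat (calE r s a) * ?S * Km n (\<lambda>w. 1 / (z' - symb r s a (cnj w))) * cmat ?F * adj ?F * Km n (\<lambda>w. 1 / (z - symb r s a w)) * (transpose_mat ?S * calE r s a)"
    unfolding B'_n_def resolv_Km'[OF n0 D z] resolv_Km'[OF n0 D z'] transpose_Km[OF n0] Pn_decomp[OF n1]
    by (subst transpose_mult[OF ST calE_carrier]) simp
  also have "\<dots> = transpose_mat (calE r s a) * (?S * (Km n (\<lambda>w. 1 / (z' - symb r s a (cnj w))) * (cmat ?F * adj ?F) * Km n (\<lambda>w. 1 / (z - symb r s a w))) * transpose_mat ?S) * calE r s a"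
    by (rule assoc_gen4) (auto simp: adj_def cmat_def)
  also have "Km n (\<lambda>w. 1 / (z' - symb r s a (cnj w))) * (cmat ?F * adj ?F) * Km n (\<lambda>w. 1 / (z - symb r s a w)) = Lm n (\<lambda>w. 1 / ((z - symb r s a (cnj w)) * (z' - symb r s a (cnj w))))"
    unfolding fourier_cadj[OF n0] Km_Lm[OF n0] Lm_Km[OF n0] by (simp add: mult.commute)
  finally show "B'_n r s a ?F n z z' = transpose_mat (calE r s a) * (?S * Lm n (\<lambda>w. 1 / ((z - symb r s a (cnj w)) * (z' - symb r s a (cnj w)))) * transpose_mat ?S) * calE r s a" .
next
  fix z z' show "B_eps 1 r s a z z' = transpose_mat (calE r s a) * moint (r+s) (\<lambda>\<omega>. (1 / (\<omega> * (z - symb r s a \<omega>) * (z' - symb r s a (\<omega> powi 1)))) \<cdot>\<^sub>m calFeps' 1 (r+s) s \<omega>) * calE r s a"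
    unfolding B_eps_def ..
qed

theorem proposition5p7:
  fixes r s :: nat and a :: "int \<Rightarrow> complex" and \<Gamma> :: "complex set"
  assumes "s \<ge> 1" and "a (int s) \<noteq> 0"
    and "compact \<Gamma>" and "\<Gamma> \<inter> symb r s a ` sphere 0 1 = {}"
  shows "unif_conv \<Gamma> (\<lambda>n. theta_n r s a n) (theta_lim r s a)
       \<and> unif_conv_mat (r+s) \<Gamma> (\<lambda>n. A_n r s a n) (A_lim r s a)
       \<and> unif_conv_mat (r+s) \<Gamma> (\<lambda>n. B_n r s a n) (B_lim r s a)
       \<and> (\<forall>(U :: nat \<Rightarrow> complex mat) (e :: int).
            ((\<forall>n. U n = fourier n) \<and> e = 1
             \<or> (\<forall>n. real_orthogonal_cmat n (U n)) \<and> e = -1) \<longrightarrow>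
              unif_conv \<Gamma> (\<lambda>n. theta'_n r s a (U n) n) (theta_eps e r s a)
            \<and> unif_conv_mat (r+s) \<Gamma> (\<lambda>n. A'_n r s a (U n) n) (A_eps e r s a)
            \<and> unif_conv_mat (r+s) \<Gamma> (\<lambda>n. B'_n r s a (U n) n) (B_eps e r s a))"
proof -
  note G = assms(3) and D = assms(4)
  have main: "unif_conv \<Gamma> (\<lambda>n. theta'_n r s a (U n) n) (theta_eps e r s a)
            \<and> unif_conv_mat (r+s) \<Gamma> (\<lambda>n. A'_n r s a (U n) n) (A_eps e r s a)
            \<and> unif_conv_mat (r+s) \<Gamma> (\<lambda>n. B'_n r s a (U n) n) (B_eps e r s a)"
    if h: "(\<forall>n. U n = fourier n) \<and> e = 1 \<or> (\<forall>n. real_orthogonal_cmat n (U n)) \<and> e = -1" for U e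
  proof (cases "(\<forall>n. U n = fourier n) \<and> e = 1")
    case True
    hence U: "U = fourier" and e: "e = 1" by auto
    show ?thesis unfolding U e using conv_theta'_F[OF G D] conv_A'_F[OF G D] conv_B'_F[OF G D] by simp
  next
    case False
    with h have U: "\<And>n. real_orthogonal_cmat n (U n)" and e: "e = -1" by auto
    show ?thesis unfolding e using conv_theta'_O[OF G D U] conv_A'_O[OF G D U] conv_B'_O[OF G D U] by simp
  qed
  show ?thesis using conv_theta[OF G D] conv_A[OF G D] conv_B[OF G D] main by blast
qed

end
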